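(* Let $\epsilon>0$, $s>0$, and $t=\frac{\epsilon^4}{900s^2}$. Let $f:\mathbb{R}^n\to\{-1,1\}$ be $((\epsilon/30)^2,s)$-smooth. Then $\mathbf{E}_{x\sim\gamma_n}[|P_tf(x)-f(x)|^2]\le\frac{\epsilon^2}{5}$.
   Context: $\gamma_n$ is the standard Gaussian measure; $P_tf(x)=\mathbf{E}_{z\sim\gamma_n}[f(e^{-t}x+\sqrt{1-e^{-2t}}z)]$. A function $f:\mathbb{R}^n\to\{-1,1\}$ is $(\eta,s)$-smooth if there is $g:\mathbb{R}^n\to\{-1,1\}$ with $\mathbf{E}_{x\sim\gamma_n}[|f-g|]\le\eta$ and $\mathsf{surf}(g)\le s(1+\eta)$, where $\mathsf{surf}(g)=\Gamma(\{g=1\})$, $\Gamma(A)=\liminf_{\delta\to0}\gamma_n(A_\delta\setminus A)/\delta$, $A_\delta=\{x:d(x,A)\le\delta\}$. *)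

theory Defs
  imports "HOL-Probability.Probability"
begin

definition gauss :: "'a::euclidean_space measure" where
  "gauss = density lborel
     (\<lambda>x. ennreal (exp (- (norm x)\<^sup>2 / 2) / (2 * pi) powr (real DIM('a) / 2)))"

definition OU :: "real \<Rightarrow> ('a::euclidean_space \<Rightarrow> real) \<Rightarrow> 'a \<Rightarrow> real" where
  "OU t f x = (\<integral>z. f (exp (- t) *\<^sub>R x + sqrt (1 - exp (-2 * t)) *\<^sub>R z) \<partial>gauss)"

text \<open>Closed delta-neighbourhood A_delta = {x. d(x,A) \<le> delta}, with d(x,{}) = \<infinity>.\<close>
definition nbhd :: "'a::euclidean_space set \<Rightarrow> real \<Rightarrow> 'a set" where
  "nbhd A \<delta> = {x. A \<noteq> {} \<and> infdist x A \<le> \<delta>}"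

definition gsurf :: "'a::euclidean_space set \<Rightarrow> ereal" where
  "gsurf A = Liminf (at_right 0)
     (\<lambda>\<delta>. ereal (measure gauss (nbhd A \<delta> - A) / \<delta>))"

definition surf :: "('a::euclidean_space \<Rightarrow> real) \<Rightarrow> ereal" where
  "surf g = gsurf {x. g x = 1}"

definition smooth :: "real \<Rightarrow> real \<Rightarrow> ('a::euclidean_space \<Rightarrow> real) \<Rightarrow> bool" where
  "smooth \<eta> s f \<longleftrightarrow> (\<exists>g. g \<in> borel_measurable borel \<and> (\<forall>x. g x \<in> {-1, 1}) \<and>
      (\<integral>x. \<bar>f x - g x\<bar> \<partial>gauss) \<le> \<eta> \<and> surf g \<le> ereal (s * (1 + \<eta>)))"

end

theory Submission
  imports Defs
begin


definition gd :: "'a::euclidean_space \<Rightarrow> real" where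
  "gd x = exp (- (norm x)\<^sup>2 / 2) / (2 * pi) powr (real DIM('a) / 2)"

lemma gauss_eq: "gauss = density lborel (\<lambda>x. ennreal (gd x))"
  unfolding gauss_def gd_def ..

lemma gd_nonneg: "0 \<le> gd x" unfolding gd_def by simp

lemma gd_pos: "0 < gd x" unfolding gd_def by simp

lemma gd_measurable[measurable]: "gd \<in> borel_measurable borel"
  unfolding gd_def by measurable

lemma gd_prod: "gd (x::'a::euclidean_space) = (\<Prod>b\<in>Basis. std_normal_density (x \<bullet> b))"
proof -
  have n: "(norm x)\<^sup>2 = (\<Sum>b\<in>Basis. (x \<bullet> b)\<^sup>2)"
  proof -
    have "(norm x)\<^sup>2 = x \<bullet> x" by (rule power2_norm_eq_inner)
    also have "\<dots> = (\<Sum>b\<in>Basis. (x \<bullet> b) * (x \<bullet> b))" by (rule euclidean_inner)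
    finally show ?thesis by (simp add: power2_eq_square)
  qed
  have p: "(2 * pi) powr (real DIM('a) / 2) = sqrt (2 * pi) ^ DIM('a)"
    by (simp add: powr_half_sqrt[symmetric] powr_realpow[symmetric] powr_powr)
  have "(\<Prod>b\<in>Basis. std_normal_density (x \<bullet> b)) = (\<Prod>b\<in>(Basis::'a set). (1 / sqrt (2 * pi)) * exp (- (x \<bullet> b)\<^sup>2 / 2))"
    by (simp add: std_normal_density_def)
  also have "\<dots> = exp (\<Sum>b\<in>Basis. - (x \<bullet> b)\<^sup>2 / 2) / sqrt (2 * pi) ^ DIM('a)"
    by (simp add: exp_sum prod_dividef)
  also have "(\<Sum>b\<in>(Basis::'a set). - (x \<bullet> b)\<^sup>2 / 2) = - (norm x)\<^sup>2 / 2"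
    by (simp add: n sum_negf sum_divide_distrib)
  finally show ?thesis unfolding gd_def p by simp
qed

lemma sets_gauss[measurable_cong, simp]: "sets gauss = sets borel"
  by (simp add: gauss_eq)

lemma space_gauss[simp]: "space gauss = UNIV"
  by (simp add: gauss_eq)

lemma measurable_gauss1[simp]: "measurable gauss M = measurable borel M"
  by (simp add: measurable_def)
lemma measurable_gauss2[simp]: "measurable M gauss = measurable M borel"
  by (simp add: measurable_def)

lemma prob_space_gauss: "prob_space (gauss :: 'a::euclidean_space measure)"
proof
  have "emeasure (gauss::'a measure) (space gauss) = (\<integral>\<^sup>+x. ennreal (gd (x::'a)) \<partial>lborel)"
    by (simp add: gauss_eq emeasure_density)
  also have "\<dots> = (\<integral>\<^sup>+x. (\<Prod>b\<in>(Basis::'a set). ennreal (std_normal_density (x \<bullet> b))) \<partial>lborel)"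
    by (simp add: gd_prod prod_ennreal)
  also have "\<dots> = (\<Prod>b\<in>(Basis::'a set). (\<integral>\<^sup>+x. ennreal (std_normal_density x) \<partial>lborel))"
    by (rule nn_integral_lborel_prod) auto
  also have "(\<integral>\<^sup>+x. ennreal (std_normal_density x) \<partial>lborel) = 1"
    by (subst nn_integral_eq_integral) auto
  finally show "emeasure (gauss::'a measure) (space gauss) = 1" by simp
qed

interpretation G: prob_space "gauss :: 'a::euclidean_space measure"
  by (rule prob_space_gauss)



lemma gd_shift: "gd (y - v) = gd y * exp (y \<bullet> v - (norm v)\<^sup>2 / 2)"
proof -
  have "(norm (y - v))\<^sup>2 = (norm y)\<^sup>2 - 2 * (y \<bullet> v) + (norm v)\<^sup>2"
    by (simp add: power2_norm_eq_inner inner_diff_left inner_diff_right inner_commute)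
  then have "- (norm (y - v))\<^sup>2 / 2 = - (norm y)\<^sup>2 / 2 + (y \<bullet> v - (norm v)\<^sup>2 / 2)"
    by (simp add: field_simps)
  then have "exp (- (norm (y - v))\<^sup>2 / 2) = exp (- (norm y)\<^sup>2 / 2) * exp (y \<bullet> v - (norm v)\<^sup>2 / 2)"
    by (simp add: exp_add[symmetric])
  then show ?thesis unfolding gd_def by simp
qed

lemma nn_integral_lborel_shift:
  fixes G :: "'a::euclidean_space \<Rightarrow> ennreal"
  assumes [measurable]: "G \<in> borel_measurable borel"
  shows "(\<integral>\<^sup>+y. G (y + v) \<partial>lborel) = (\<integral>\<^sup>+y. G y \<partial>lborel)"
proof -
  have "(\<integral>\<^sup>+y. G y \<partial>lborel) = (\<integral>\<^sup>+y. G y \<partial>(distr lborel borel ((+) v)))"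
    by (simp add: lborel_distr_plus)
  also have "\<dots> = (\<integral>\<^sup>+y. G (v + y) \<partial>lborel)"
    by (subst nn_integral_distr) auto
  finally show ?thesis by (simp add: add.commute)
qed

lemma integral_lborel_shift:
  fixes G :: "'a::euclidean_space \<Rightarrow> real"
  assumes [measurable]: "G \<in> borel_measurable borel"
  shows "(\<integral>y. G (y + v) \<partial>lborel) = (\<integral>y. G y \<partial>lborel)"
proof -
  have "(\<integral>y. G y \<partial>lborel) = (\<integral>y. G y \<partial>(distr lborel borel ((+) v)))"
    by (simp add: lborel_distr_plus)
  also have "\<dots> = (\<integral>y. G (v + y) \<partial>lborel)"
    by (subst integral_distr) auto
  finally show ?thesis by (simp add: add.commute)
qed

lemma CM_nn:
  fixes F :: "'a::euclidean_space \<Rightarrow> ennreal"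
  assumes [measurable]: "F \<in> borel_measurable borel"
  shows "(\<integral>\<^sup>+y. F (y + v) \<partial>gauss) = (\<integral>\<^sup>+y. F y * ennreal (exp (y \<bullet> v - (norm v)\<^sup>2 / 2)) \<partial>gauss)"
proof -
  have "(\<integral>\<^sup>+y. F (y + v) \<partial>gauss) = (\<integral>\<^sup>+y. ennreal (gd y) * F (y + v) \<partial>lborel)"
    by (simp add: gauss_eq nn_integral_density)
  also have "\<dots> = (\<integral>\<^sup>+y. ennreal (gd ((y + v) - v)) * F (y + v) \<partial>lborel)"
    by simp
  also have "\<dots> = (\<integral>\<^sup>+y. ennreal (gd (y - v)) * F y \<partial>lborel)"
    by (rule nn_integral_lborel_shift[where G="\<lambda>y. ennreal (gd (y - v)) * F y"]) measurable
  also have "\<dots> = (\<integral>\<^sup>+y. ennreal (gd y) * (F y * ennreal (exp (y \<bullet> v - (norm v)\<^sup>2 / 2))) \<partial>lborel)"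
    by (intro nn_integral_cong) (simp add: gd_shift ennreal_mult gd_nonneg mult_ac)
  also have "\<dots> = (\<integral>\<^sup>+y. F y * ennreal (exp (y \<bullet> v - (norm v)\<^sup>2 / 2)) \<partial>gauss)"
    by (simp add: gauss_eq nn_integral_density)
  finally show ?thesis .
qed

lemma CM_int:
  fixes F :: "'a::euclidean_space \<Rightarrow> real"
  assumes [measurable]: "F \<in> borel_measurable borel"
  shows "(\<integral>y. F (y + v) \<partial>gauss) = (\<integral>y. F y * exp (y \<bullet> v - (norm v)\<^sup>2 / 2) \<partial>gauss)"
proof -
  have "(\<integral>y. F (y + v) \<partial>gauss) = (\<integral>y. gd y * F (y + v) \<partial>lborel)"
    by (simp add: gauss_eq integral_density gd_nonneg)
  also have "\<dots> = (\<integral>y. gd ((y + v) - v) * F (y + v) \<partial>lborel)"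
    by simp
  also have "\<dots> = (\<integral>y. gd (y - v) * F y \<partial>lborel)"
    by (rule integral_lborel_shift[where G="\<lambda>y. gd (y - v) * F y"]) measurable
  also have "\<dots> = (\<integral>y. gd y * (F y * exp (y \<bullet> v - (norm v)\<^sup>2 / 2)) \<partial>lborel)"
    by (intro Bochner_Integration.integral_cong) (simp_all add: gd_shift mult_ac)
  also have "\<dots> = (\<integral>y. F y * exp (y \<bullet> v - (norm v)\<^sup>2 / 2) \<partial>gauss)"
    by (simp add: gauss_eq integral_density gd_nonneg)
  finally show ?thesis .
qed

lemma nn_integral_exp_inner: "(\<integral>\<^sup>+y. ennreal (exp (y \<bullet> v)) \<partial>(gauss::'a::euclidean_space measure)) = ennreal (exp ((norm v)\<^sup>2 / 2))"
proof -
  let ?c = "exp (- (norm v)\<^sup>2 / 2)"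
  have "1 = (\<integral>\<^sup>+y. (\<lambda>_. 1::ennreal) (y + v) \<partial>(gauss::'a measure))"
    using G.emeasure_space_1 by simp
  also have "\<dots> = (\<integral>\<^sup>+y. 1 * ennreal (exp (y \<bullet> v - (norm v)\<^sup>2 / 2)) \<partial>gauss)"
    by (rule CM_nn) auto
  also have "\<dots> = (\<integral>\<^sup>+y. ennreal (exp (y \<bullet> v)) * ennreal ?c \<partial>gauss)"
  proof (rule nn_integral_cong)
    fix y :: 'a
    have "exp (y \<bullet> v - (norm v)\<^sup>2 / 2) = exp (y \<bullet> v) * ?c"
      by (simp add: exp_add[symmetric])
    then show "1 * ennreal (exp (y \<bullet> v - (norm v)\<^sup>2 / 2)) = ennreal (exp (y \<bullet> v)) * ennreal ?c"
      by (simp add: ennreal_mult)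
  qed
  also have "\<dots> = (\<integral>\<^sup>+y. ennreal (exp (y \<bullet> v)) \<partial>gauss) * ennreal ?c"
    by (rule nn_integral_multc) measurable
  finally have eq: "(\<integral>\<^sup>+y. ennreal (exp (y \<bullet> v)) \<partial>(gauss::'a measure)) * ennreal ?c = 1" ..
  have "ennreal ?c * ennreal (exp ((norm v)\<^sup>2 / 2)) = 1"
    by (simp add: ennreal_mult[symmetric] exp_add[symmetric])
  then have "(\<integral>\<^sup>+y. ennreal (exp (y \<bullet> v)) \<partial>(gauss::'a measure)) = (\<integral>\<^sup>+y. ennreal (exp (y \<bullet> v)) \<partial>(gauss::'a measure)) * (ennreal ?c * ennreal (exp ((norm v)\<^sup>2 / 2)))"
    by simp
  also have "\<dots> = ennreal (exp ((norm v)\<^sup>2 / 2))"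
    by (simp only: mult.assoc[symmetric] eq) simp
  finally show ?thesis .
qed

lemma integrable_exp_inner: "integrable (gauss::'a::euclidean_space measure) (\<lambda>y. exp (y \<bullet> v))"
  by (rule integrableI_nonneg) (auto simp: nn_integral_exp_inner)

lemma exp_norm_le_sum:
  fixes y :: "'a::euclidean_space"
  assumes "c \<ge> 0"
  shows "exp (c * norm y) \<le> (\<Sum>b\<in>Basis. exp (y \<bullet> ((c * DIM('a)) *\<^sub>R b)) + exp (y \<bullet> (- (c * DIM('a)) *\<^sub>R b)))"
proof -
  have "\<exists>b0\<in>Basis. \<forall>b\<in>Basis. \<bar>y \<bullet> b\<bar> \<le> \<bar>y \<bullet> b0\<bar>"
  proof -
    have "Max ((\<lambda>b. \<bar>y \<bullet> b\<bar>) ` Basis) \<in> (\<lambda>b. \<bar>y \<bullet> b\<bar>) ` (Basis::'a set)"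
      by (rule Max_in) simp_all
    then obtain b0 where b0: "b0 \<in> Basis" "Max ((\<lambda>b. \<bar>y \<bullet> b\<bar>) ` Basis) = \<bar>y \<bullet> b0\<bar>"
      by (rule imageE) simp
    have "\<forall>b\<in>Basis. \<bar>y \<bullet> b\<bar> \<le> \<bar>y \<bullet> b0\<bar>"
      unfolding b0(2)[symmetric] by (simp add: Max_ge)
    then show ?thesis using b0(1) by blast
  qed
  then obtain b0 where b0: "b0 \<in> Basis" "\<And>b. b \<in> Basis \<Longrightarrow> \<bar>y \<bullet> b\<bar> \<le> \<bar>y \<bullet> b0\<bar>" by blast
  have "norm y \<le> (\<Sum>b\<in>Basis. \<bar>y \<bullet> b\<bar>)" by (rule norm_le_l1)
  also have "\<dots> \<le> (\<Sum>b\<in>(Basis::'a set). \<bar>y \<bullet> b0\<bar>)" by (intro sum_mono b0)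
  also have "\<dots> = DIM('a) * \<bar>y \<bullet> b0\<bar>" by simp
  finally have "c * norm y \<le> c * (DIM('a) * \<bar>y \<bullet> b0\<bar>)" using assms by (intro mult_left_mono) auto
  then have "exp (c * norm y) \<le> exp (c * DIM('a) * \<bar>y \<bullet> b0\<bar>)" by (simp add: mult.assoc)
  also have "\<dots> \<le> exp (y \<bullet> ((c * DIM('a)) *\<^sub>R b0)) + exp (y \<bullet> (- (c * DIM('a)) *\<^sub>R b0))"
  proof -
    have e: "y \<bullet> ((c * DIM('a)) *\<^sub>R b0) = c * DIM('a) * (y \<bullet> b0)" "y \<bullet> (- (c * DIM('a)) *\<^sub>R b0) = - (c * DIM('a) * (y \<bullet> b0))"
      by (simp_all add: inner_scaleR_right)
    have "exp (c * DIM('a) * \<bar>y \<bullet> b0\<bar>) = exp (c * DIM('a) * (y \<bullet> b0)) \<or> exp (c * DIM('a) * \<bar>y \<bullet> b0\<bar>) = exp (- (c * DIM('a) * (y \<bullet> b0)))"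
      by (cases "y \<bullet> b0 \<ge> 0") simp_all
    moreover have "0 < exp (c * DIM('a) * (y \<bullet> b0))" "0 < exp (- (c * DIM('a) * (y \<bullet> b0)))" by simp_all
    ultimately show ?thesis unfolding e by linarith
  qed
  also have "\<dots> \<le> (\<Sum>b\<in>Basis. exp (y \<bullet> ((c * DIM('a)) *\<^sub>R b)) + exp (y \<bullet> (- (c * DIM('a)) *\<^sub>R b)))"
    using b0(1) by (intro member_le_sum add_nonneg_nonneg) simp_all
  finally show ?thesis .
qed

lemma integrable_exp_norm: "integrable (gauss::'a::euclidean_space measure) (\<lambda>y. exp (c * norm y))"
proof (cases "c \<ge> 0")
  case True
  define F where "F = (\<lambda>y::'a. \<Sum>b\<in>Basis. exp (y \<bullet> ((c * DIM('a)) *\<^sub>R b)) + exp (y \<bullet> (- (c * DIM('a)) *\<^sub>R b)))"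
  have int: "integrable gauss F"
    unfolding F_def by (intro Bochner_Integration.integrable_sum Bochner_Integration.integrable_add integrable_exp_inner)
  have le: "norm (exp (c * norm y)) \<le> norm (F y)" for y
  proof -
    have "exp (c * norm y) \<le> F y" unfolding F_def by (rule exp_norm_le_sum[OF True])
    also have "F y \<le> norm (F y)" by simp
    finally show ?thesis by simp
  qed
  show ?thesis
    by (rule Bochner_Integration.integrable_bound[OF int _ AE_I2[OF le]]) measurable
next
  case False
  have le: "norm (exp (c * norm y)) \<le> norm (1::real)" for y::'a
    using False by (simp add: mult_nonpos_nonneg)
  show ?thesis
    by (rule Bochner_Integration.integrable_bound[OF _ _ AE_I2[OF le]]) measurable
qed

lemma integrable_norm_gauss: "integrable (gauss::'a::euclidean_space measure) (\<lambda>y. norm y)"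
proof -
  have le: "norm (norm y) \<le> norm (exp (1 * norm y))" for y::'a
  proof -
    have "norm y \<le> exp (norm y)" using exp_ge_add_one_self[of "norm y"] by linarith
    then show ?thesis by simp
  qed
  show ?thesis
    by (rule Bochner_Integration.integrable_bound[OF integrable_exp_norm[of 1] _ AE_I2[OF le]]) measurable
qed



lemma measure_gauss_UNIV[simp]: "measure (gauss::'a::euclidean_space measure) UNIV = 1"
  using G.prob_space[where 'a='a] by simp

lemma abs_exp_sub_one: "\<bar>exp a - 1\<bar> \<le> \<bar>a\<bar> * exp \<bar>a\<bar>" for a :: real
proof (cases "a \<ge> 0")
  case True
  have "exp (-a) \<ge> 1 - a" using exp_ge_add_one_self[of "-a"] by simp
  then have "exp (-a) * exp a \<ge> (1 - a) * exp a" by (intro mult_right_mono) auto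
  then have "1 \<ge> (1 - a) * exp a" by (simp add: exp_minus field_simps)
  then show ?thesis using True by (simp add: algebra_simps)
next
  case False
  have "exp a \<ge> 1 + a" by (rule exp_ge_add_one_self)
  moreover have "exp a \<le> 1" using False by simp
  moreover have "1 \<le> exp \<bar>a\<bar>" by simp
  moreover have "\<bar>exp a - 1\<bar> = 1 - exp a" using \<open>exp a \<le> 1\<close> by simp
  ultimately have "\<bar>exp a - 1\<bar> \<le> \<bar>a\<bar>" using False by linarith
  also have "\<dots> \<le> \<bar>a\<bar> * exp \<bar>a\<bar>" using \<open>1 \<le> exp \<bar>a\<bar>\<close> by (simp add: mult_le_cancel_left1)
  finally show ?thesis .
qed

lemma integrable_exp_bound:
  fixes H :: "'a::euclidean_space \<Rightarrow> real"
  assumes [measurable]: "H \<in> borel_measurable borel" and K: "\<And>y. \<bar>H y\<bar> \<le> C * exp (K * norm y)"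
  shows "integrable gauss H"
proof (rule Bochner_Integration.integrable_bound[OF integrable_mult_right[OF integrable_exp_norm[of K]]])
  show "AE x in gauss. norm (H x) \<le> norm (C * exp (K * norm x))"
    using K by (intro AE_I2) (auto intro: order_trans[OF _ abs_ge_self])
qed measurable

lemma DL:
  fixes H :: "'a::euclidean_space \<Rightarrow> real" and s :: "nat \<Rightarrow> real"
  assumes H[measurable]: "H \<in> borel_measurable borel" and K: "\<And>y. \<bar>H y\<bar> \<le> K * exp (K * norm y)"
    and s: "s \<longlonglongrightarrow> 0" "\<And>N. s N \<noteq> 0" "\<And>N. \<bar>s N\<bar> \<le> 1"
  shows "(\<lambda>N. ((\<integral>y. H (y + s N *\<^sub>R v) \<partial>gauss) - (\<integral>y. H y \<partial>gauss)) / s N) \<longlonglongrightarrow> (\<integral>y. H y * (y \<bullet> v) \<partial>gauss)"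
proof -
  define E where "E = (\<lambda>\<sigma> (y::'a). exp (\<sigma> * (y \<bullet> v) - \<sigma>\<^sup>2 * ((norm v)\<^sup>2 / 2)))"
  have K0: "K \<ge> 0"
  proof -
    have "\<bar>H 0\<bar> \<le> K" using K[of 0] by simp
    then show ?thesis using abs_ge_zero[of "H 0"] by linarith
  qed
  have Eeq: "exp (y \<bullet> (\<sigma> *\<^sub>R v) - (norm (\<sigma> *\<^sub>R v))\<^sup>2 / 2) = E \<sigma> y" for \<sigma> y
    by (simp add: E_def power_mult_distrib)
  have intH: "integrable gauss H" by (rule integrable_exp_bound[OF H K])
  have intHE: "integrable gauss (\<lambda>y. H y * E \<sigma> y)" if "\<bar>\<sigma>\<bar> \<le> 1" for \<sigma>
  proof (rule integrable_exp_bound[where C=K and K="K + norm v"])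
    fix y :: 'a
    have "\<sigma> * (y \<bullet> v) - \<sigma>\<^sup>2 * ((norm v)\<^sup>2 / 2) \<le> norm v * norm y"
    proof -
      have "\<sigma> * (y \<bullet> v) \<le> \<bar>\<sigma>\<bar> * \<bar>y \<bullet> v\<bar>" by (simp add: abs_mult[symmetric])
      also have "\<dots> \<le> 1 * (norm y * norm v)" using that by (intro mult_mono Cauchy_Schwarz_ineq2) auto
      finally have c: "\<sigma> * (y \<bullet> v) \<le> norm v * norm y" by (simp add: mult.commute)
      have "0 \<le> \<sigma>\<^sup>2 * ((norm v)\<^sup>2 / 2)" by simp
      then show ?thesis using c by linarith
    qed
    then have "E \<sigma> y \<le> exp (norm v * norm y)" unfolding E_def by simp
    then have "\<bar>H y * E \<sigma> y\<bar> \<le> K * exp (K * norm y) * exp (norm v * norm y)"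
      unfolding abs_mult using K[of y] by (intro mult_mono) (auto simp: E_def)
    then show "\<bar>H y * E \<sigma> y\<bar> \<le> K * exp ((K + norm v) * norm y)"
      by (simp add: distrib_right exp_add mult.assoc)
  qed (simp add: E_def)
  define W where "W = (\<lambda>y::'a. K * ((1 + norm v + (norm v)\<^sup>2) * exp ((norm v)\<^sup>2 / 2)) * exp ((K + norm v + 1) * norm y))"
  have intW: "integrable gauss W" unfolding W_def by (intro integrable_mult_right integrable_exp_norm)
  have bound: "\<bar>H y * ((E \<sigma> y - 1) / \<sigma>)\<bar> \<le> W y" if "\<bar>\<sigma>\<bar> \<le> 1" "\<sigma> \<noteq> 0" for \<sigma> y
  proof -
    define a where "a = \<sigma> * (y \<bullet> v) - \<sigma>\<^sup>2 * ((norm v)\<^sup>2 / 2)"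
    have "\<bar>a\<bar> \<le> \<bar>\<sigma>\<bar> * (norm y * norm v + (norm v)\<^sup>2 / 2)"
    proof -
      have "\<bar>a\<bar> \<le> \<bar>\<sigma> * (y \<bullet> v)\<bar> + \<bar>\<sigma>\<^sup>2 * ((norm v)\<^sup>2 / 2)\<bar>" unfolding a_def
        by (rule abs_triangle_ineq4)
      also have "\<dots> = \<bar>\<sigma>\<bar> * \<bar>y \<bullet> v\<bar> + \<sigma>\<^sup>2 * ((norm v)\<^sup>2 / 2)"
        by (simp add: abs_mult)
      also have "\<sigma>\<^sup>2 \<le> \<bar>\<sigma>\<bar>"
      proof -
        have "\<bar>\<sigma>\<bar> * \<bar>\<sigma>\<bar> \<le> \<bar>\<sigma>\<bar> * 1" by (rule mult_left_mono) (use that in auto)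
        then show ?thesis by (simp add: power2_eq_square)
      qed
      then have "\<sigma>\<^sup>2 * ((norm v)\<^sup>2 / 2) \<le> \<bar>\<sigma>\<bar> * ((norm v)\<^sup>2 / 2)" by (intro mult_right_mono) auto
      finally have "\<bar>a\<bar> \<le> \<bar>\<sigma>\<bar> * \<bar>y \<bullet> v\<bar> + \<bar>\<sigma>\<bar> * ((norm v)\<^sup>2 / 2)" by simp
      also have "\<dots> \<le> \<bar>\<sigma>\<bar> * (norm y * norm v) + \<bar>\<sigma>\<bar> * ((norm v)\<^sup>2 / 2)"
        by (intro add_mono mult_left_mono Cauchy_Schwarz_ineq2) auto
      finally show ?thesis by (simp add: distrib_left)
    qed
    then have a1: "\<bar>a\<bar> / \<bar>\<sigma>\<bar> \<le> norm y * norm v + (norm v)\<^sup>2 / 2"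
      using that by (simp add: divide_le_eq mult.commute)
    have a2: "\<bar>a\<bar> \<le> norm y * norm v + (norm v)\<^sup>2 / 2"
    proof -
      have "\<bar>\<sigma>\<bar> * (norm y * norm v + (norm v)\<^sup>2 / 2) \<le> norm y * norm v + (norm v)\<^sup>2 / 2"
        by (rule mult_left_le_one_le) (use that in auto)
      then show ?thesis using \<open>\<bar>a\<bar> \<le> _\<close> by linarith
    qed
    have "\<bar>(E \<sigma> y - 1) / \<sigma>\<bar> = \<bar>exp a - 1\<bar> / \<bar>\<sigma>\<bar>" by (simp add: E_def a_def)
    also have "\<dots> \<le> \<bar>a\<bar> * exp \<bar>a\<bar> / \<bar>\<sigma>\<bar>" by (intro divide_right_mono abs_exp_sub_one) auto
    also have "\<dots> = (\<bar>a\<bar> / \<bar>\<sigma>\<bar>) * exp \<bar>a\<bar>" by simp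
    also have "\<dots> \<le> (norm y * norm v + (norm v)\<^sup>2 / 2) * exp (norm y * norm v + (norm v)\<^sup>2 / 2)"
      using a1 a2 by (intro mult_mono) auto
    also have "\<dots> \<le> ((1 + norm v + (norm v)\<^sup>2) * exp (norm y)) * (exp ((norm v)\<^sup>2 / 2) * exp (norm v * norm y))"
    proof (intro mult_mono)
      have "norm y \<le> exp (norm y)" using exp_ge_add_one_self[of "norm y"] by linarith
      moreover have "1 \<le> exp (norm y)" by simp
      have h1: "norm y * norm v \<le> exp (norm y) * norm v"
        by (rule mult_right_mono) (use \<open>norm y \<le> exp (norm y)\<close> in simp_all)
      have "(norm v)\<^sup>2 * 1 \<le> (norm v)\<^sup>2 * exp (norm y)"
        by (rule mult_left_mono) simp_all
      then have h2: "(norm v)\<^sup>2 / 2 \<le> (norm v)\<^sup>2 * exp (norm y)" 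
        using zero_le_power2[of "norm v"] by linarith
      have h3: "(1 + norm v + (norm v)\<^sup>2) * exp (norm y) = exp (norm y) + exp (norm y) * norm v + (norm v)\<^sup>2 * exp (norm y)"
        by (simp add: algebra_simps)
      show "norm y * norm v + (norm v)\<^sup>2 / 2 \<le> (1 + norm v + (norm v)\<^sup>2) * exp (norm y)"
        unfolding h3 using h1 h2 exp_gt_zero[of "norm y"] by linarith
      show "exp (norm y * norm v + (norm v)\<^sup>2 / 2) \<le> exp ((norm v)\<^sup>2 / 2) * exp (norm v * norm y)"
        by (simp add: exp_add[symmetric] mult.commute)
    qed auto
    finally have q0: "\<bar>(E \<sigma> y - 1) / \<sigma>\<bar> \<le> ((1 + norm v + (norm v)\<^sup>2) * exp (norm y)) * (exp ((norm v)\<^sup>2 / 2) * exp (norm v * norm y))" .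
    have eqx: "((1 + norm v + (norm v)\<^sup>2) * exp (norm y)) * (exp ((norm v)\<^sup>2 / 2) * exp (norm v * norm y)) = ((1 + norm v + (norm v)\<^sup>2) * exp ((norm v)\<^sup>2 / 2)) * exp ((norm v + 1) * norm y)"
    proof -
      have ee: "exp ((norm v + 1) * norm y) = exp (norm v * norm y) * exp (norm y)"
        by (simp add: distrib_right exp_add)
      show ?thesis unfolding ee by (simp only: mult_ac)
    qed
    have q: "\<bar>(E \<sigma> y - 1) / \<sigma>\<bar> \<le> ((1 + norm v + (norm v)\<^sup>2) * exp ((norm v)\<^sup>2 / 2)) * exp ((norm v + 1) * norm y)"
      using q0 eqx by linarith
    have "\<bar>H y * ((E \<sigma> y - 1) / \<sigma>)\<bar> \<le> (K * exp (K * norm y)) * (((1 + norm v + (norm v)\<^sup>2) * exp ((norm v)\<^sup>2 / 2)) * exp ((norm v + 1) * norm y))"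
      unfolding abs_mult by (intro mult_mono K q) (use K0 in auto)
    also have "\<dots> = W y"
    proof -
      have ee: "exp ((K + norm v + 1) * norm y) = exp (K * norm y) * exp ((norm v + 1) * norm y)"
        by (simp add: distrib_right exp_add)
      show ?thesis unfolding W_def ee by (simp only: mult_ac)
    qed
    finally show ?thesis .
  qed
  have lim: "(\<lambda>N. (E (s N) y - 1) / s N) \<longlonglongrightarrow> y \<bullet> v" for y
  proof -
    have d: "((\<lambda>\<sigma>. E \<sigma> y) has_real_derivative (y \<bullet> v)) (at 0)"
      unfolding E_def by (auto intro!: derivative_eq_intros)
    then have "((\<lambda>h. (E (0 + h) y - E 0 y) / h) \<longlongrightarrow> y \<bullet> v) (at 0)"
      by (simp add: DERIV_def)
    then have "((\<lambda>h. (E h y - 1) / h) \<longlongrightarrow> y \<bullet> v) (at 0)" by (simp add: E_def)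
    moreover have "filterlim s (at 0) sequentially"
      using s by (auto simp: filterlim_at)
    ultimately show ?thesis by (rule filterlim_compose)
  qed
  have eq: "((\<integral>y. H (y + s N *\<^sub>R v) \<partial>gauss) - (\<integral>y. H y \<partial>gauss)) / s N = (\<integral>y. H y * ((E (s N) y - 1) / s N) \<partial>gauss)" for N
  proof -
    have "(\<integral>y. H (y + s N *\<^sub>R v) \<partial>gauss) = (\<integral>y. H y * exp (y \<bullet> (s N *\<^sub>R v) - (norm (s N *\<^sub>R v))\<^sup>2 / 2) \<partial>gauss)"
      by (rule CM_int) (rule H)
    also have "\<dots> = (\<integral>y. H y * E (s N) y \<partial>gauss)" by (simp only: Eeq)
    finally have "(\<integral>y. H (y + s N *\<^sub>R v) \<partial>gauss) = (\<integral>y. H y * E (s N) y \<partial>gauss)" .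
    then have "(\<integral>y. H (y + s N *\<^sub>R v) \<partial>gauss) - (\<integral>y. H y \<partial>gauss) = (\<integral>y. H y * E (s N) y - H y \<partial>gauss)"
      using intHE[OF s(3)] intH by simp
    also have "\<dots> = (\<integral>y. H y * ((E (s N) y - 1) / s N) \<partial>gauss) * s N"
      using s(2)[of N] by (simp add: field_simps)
    finally show ?thesis using s(2)[of N] by simp
  qed
  show ?thesis
    unfolding eq
  proof (rule integral_dominated_convergence[where w=W])
    show "AE y in gauss. (\<lambda>N. H y * ((E (s N) y - 1) / s N)) \<longlonglongrightarrow> H y * (y \<bullet> v)"
      by (intro AE_I2 tendsto_mult tendsto_const lim)
    show "AE y in gauss. norm (H y * ((E (s N) y - 1) / s N)) \<le> W y" for N
      using bound[OF s(3) s(2)] by simp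
  qed (auto simp: intW E_def)
qed

lemma second_moment: "(\<integral>y. (y \<bullet> e) * (y \<bullet> e) \<partial>(gauss::'a::euclidean_space measure)) = (norm e)\<^sup>2"
proof -
  let ?K = "norm e + 1"
  have K: "\<bar>y \<bullet> e\<bar> \<le> ?K * exp (?K * norm y)" for y :: 'a
  proof -
    have "\<bar>y \<bullet> e\<bar> \<le> norm y * norm e" by (rule Cauchy_Schwarz_ineq2)
    also have "\<dots> \<le> exp (?K * norm y) * ?K"
    proof (intro mult_mono)
      have "norm y \<le> ?K * norm y" by (simp add: distrib_right)
      also have "\<dots> \<le> exp (?K * norm y)" using exp_ge_add_one_self[of "?K * norm y"] by linarith
      finally show "norm y \<le> exp (?K * norm y)" .
    qed auto
    finally show ?thesis by (simp add: mult.commute)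
  qed
  define s where "s = (\<lambda>N::nat. inverse (real (Suc N)))"
  have s: "s \<longlonglongrightarrow> 0" "\<And>N. s N \<noteq> 0" "\<And>N. \<bar>s N\<bar> \<le> 1"
    unfolding s_def using LIMSEQ_inverse_real_of_nat by (auto simp: inverse_le_1_iff)
  have int: "integrable gauss (\<lambda>y::'a. y \<bullet> e)" by (rule integrable_exp_bound[OF _ K]) measurable
  have "(\<lambda>N. ((\<integral>y. (y + s N *\<^sub>R e) \<bullet> e \<partial>gauss) - (\<integral>y. y \<bullet> e \<partial>(gauss::'a measure))) / s N) \<longlonglongrightarrow> (\<integral>y. (y \<bullet> e) * (y \<bullet> e) \<partial>gauss)"
    by (rule DL[OF _ K s]) measurable
  moreover have "((\<integral>y. (y + s N *\<^sub>R e) \<bullet> e \<partial>gauss) - (\<integral>y. y \<bullet> e \<partial>(gauss::'a measure))) / s N = (norm e)\<^sup>2" for N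
  proof -
    have "(\<integral>y. (y + s N *\<^sub>R e) \<bullet> e \<partial>gauss) = (\<integral>y. y \<bullet> e + s N * (norm e)\<^sup>2 \<partial>(gauss::'a measure))"
      by (simp add: inner_add_left power2_norm_eq_inner)
    also have "\<dots> = (\<integral>y. y \<bullet> e \<partial>gauss) + s N * (norm e)\<^sup>2"
      using int by simp
    finally show ?thesis using s(2)[of N] by simp
  qed
  ultimately have "(\<lambda>N. (norm e)\<^sup>2) \<longlonglongrightarrow> (\<integral>y. (y \<bullet> e) * (y \<bullet> e) \<partial>(gauss::'a measure))" by simp
  from LIMSEQ_unique[OF tendsto_const this] show ?thesis by simp
qed

lemma abs_inner_gauss:
  "integrable (gauss::'a::euclidean_space measure) (\<lambda>y. \<bar>y \<bullet> g\<bar>) \<and> (\<integral>y. \<bar>y \<bullet> g\<bar> \<partial>(gauss::'a measure)) \<le> norm g"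
proof -
  have int1: "integrable (gauss::'a measure) (\<lambda>y. y \<bullet> g)"
    by (rule Bochner_Integration.integrable_bound[OF Bochner_Integration.integrable_mult_left[OF integrable_norm_gauss, of "norm g"]])
       (auto intro!: AE_I2 simp: mult.commute[of "norm g"] Cauchy_Schwarz_ineq2)
  have int2: "integrable (gauss::'a measure) (\<lambda>y. (y \<bullet> g) * (y \<bullet> g))"
  proof (rule Bochner_Integration.integrable_bound[OF integrable_mult_right[OF integrable_exp_norm[of "2 * norm g"]], of _ "1"])
    show "AE y in gauss. norm ((y \<bullet> g) * (y \<bullet> g)) \<le> norm (1 * exp (2 * norm g * norm y))"
    proof (intro AE_I2)
      fix y :: 'a
      have "\<bar>y \<bullet> g\<bar> \<le> norm y * norm g" by (rule Cauchy_Schwarz_ineq2)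
      also have "\<dots> = norm g * norm y" by (simp add: mult.commute)
      also have "\<dots> \<le> exp (norm g * norm y)" using exp_ge_add_one_self[of "norm g * norm y"] by linarith
      finally have "\<bar>y \<bullet> g\<bar> * \<bar>y \<bullet> g\<bar> \<le> exp (norm g * norm y) * exp (norm g * norm y)"
        by (intro mult_mono) auto
      then show "norm ((y \<bullet> g) * (y \<bullet> g)) \<le> norm (1 * exp (2 * norm g * norm y))"
        by (simp add: abs_mult exp_add[symmetric] mult.assoc)
    qed
  qed measurable
  have intabs: "integrable (gauss::'a measure) (\<lambda>y. \<bar>y \<bullet> g\<bar>)" using int1 by simp
  show ?thesis
  proof (cases "g = 0")
    case True then show ?thesis by simp
  next
    case False
    then have ng: "norm g > 0" by simp
    have "(\<integral>y. \<bar>y \<bullet> g\<bar> \<partial>(gauss::'a measure)) \<le> (\<integral>y. ((y \<bullet> g) * (y \<bullet> g) / norm g + norm g) / 2 \<partial>gauss)"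
    proof (rule integral_mono[OF intabs])
      show "integrable gauss (\<lambda>y::'a. ((y \<bullet> g) * (y \<bullet> g) / norm g + norm g) / 2)"
        using int2 by (intro integrable_divide Bochner_Integration.integrable_add integrable_const) auto
      fix y :: 'a
      have "0 \<le> (\<bar>y \<bullet> g\<bar> - norm g)\<^sup>2" by simp
      then have "2 * \<bar>y \<bullet> g\<bar> * norm g \<le> (y \<bullet> g) * (y \<bullet> g) + norm g * norm g"
        by (simp add: power2_eq_square algebra_simps abs_mult_self_eq)
      then show "\<bar>y \<bullet> g\<bar> \<le> ((y \<bullet> g) * (y \<bullet> g) / norm g + norm g) / 2"
        using ng by (simp add: field_simps)
    qed
    also have "\<dots> = ((norm g)\<^sup>2 / norm g + norm g) / 2"
      using int2 by (simp add: second_moment)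
    also have "\<dots> = norm g" using ng by (simp add: power2_eq_square)
    finally show ?thesis using intabs by simp
  qed
qed



lemma meas_pair_L2:
  fixes f g :: "'b \<Rightarrow> 'a::euclidean_space"
  assumes "f \<in> borel_measurable M" "g \<in> borel_measurable M"
  shows "(\<lambda>p. (f p, g p)) \<in> measurable M (lborel \<Otimes>\<^sub>M lborel)"
  using assms by (intro measurable_Pair) simp_all

lemma shear1:
  fixes G :: "'a::euclidean_space \<times> 'a \<Rightarrow> ennreal"
  assumes G[measurable]: "G \<in> borel_measurable (lborel \<Otimes>\<^sub>M lborel)"
  shows "(\<integral>\<^sup>+p. G (fst p + c *\<^sub>R snd p, snd p) \<partial>(lborel \<Otimes>\<^sub>M lborel)) = (\<integral>\<^sup>+p. G p \<partial>(lborel \<Otimes>\<^sub>M lborel))"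
proof -
  have "(\<integral>\<^sup>+p. G (fst p + c *\<^sub>R snd p, snd p) \<partial>(lborel \<Otimes>\<^sub>M lborel)) = (\<integral>\<^sup>+z. (\<integral>\<^sup>+x. G (x + c *\<^sub>R z, z) \<partial>lborel) \<partial>lborel)"
  proof -
    have m: "(\<lambda>p. G (fst p + c *\<^sub>R snd p, snd p)) \<in> borel_measurable (lborel \<Otimes>\<^sub>M lborel)"
      by (rule measurable_compose[OF meas_pair_L2 G]) measurable
    show ?thesis by (subst lborel_pair.nn_integral_snd[symmetric, OF m]) simp
  qed
  also have "\<dots> = (\<integral>\<^sup>+z. (\<integral>\<^sup>+x. G (x, z) \<partial>lborel) \<partial>lborel)"
    by (intro nn_integral_cong nn_integral_lborel_shift[where G="\<lambda>x. G (x, z)" for z]) measurable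
  also have "\<dots> = (\<integral>\<^sup>+p. G p \<partial>(lborel \<Otimes>\<^sub>M lborel))"
    by (subst lborel_pair.nn_integral_snd[symmetric, OF G]) simp
  finally show ?thesis .
qed

lemma shear2:
  fixes G :: "'a::euclidean_space \<times> 'a \<Rightarrow> ennreal"
  assumes G[measurable]: "G \<in> borel_measurable (lborel \<Otimes>\<^sub>M lborel)"
  shows "(\<integral>\<^sup>+p. G (fst p, snd p + c *\<^sub>R fst p) \<partial>(lborel \<Otimes>\<^sub>M lborel)) = (\<integral>\<^sup>+p. G p \<partial>(lborel \<Otimes>\<^sub>M lborel))"
proof -
  have "(\<integral>\<^sup>+p. G (fst p, snd p + c *\<^sub>R fst p) \<partial>(lborel \<Otimes>\<^sub>M lborel)) = (\<integral>\<^sup>+x. (\<integral>\<^sup>+z. G (x, z + c *\<^sub>R x) \<partial>lborel) \<partial>lborel)"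
  proof -
    have m: "(\<lambda>p. G (fst p, snd p + c *\<^sub>R fst p)) \<in> borel_measurable (lborel \<Otimes>\<^sub>M lborel)"
      by (rule measurable_compose[OF meas_pair_L2 G]) measurable
    show ?thesis by (subst lborel.nn_integral_fst[symmetric, OF m]) simp
  qed
  also have "\<dots> = (\<integral>\<^sup>+x. (\<integral>\<^sup>+z. G (x, z) \<partial>lborel) \<partial>lborel)"
    by (intro nn_integral_cong nn_integral_lborel_shift[where G="\<lambda>z. G (x, z)" for x]) measurable
  also have "\<dots> = (\<integral>\<^sup>+p. G p \<partial>(lborel \<Otimes>\<^sub>M lborel))"
    by (subst lborel.nn_integral_fst[symmetric, OF G]) simp
  finally show ?thesis .
qed

definition rot :: "real \<Rightarrow> real \<Rightarrow> 'a::euclidean_space \<times> 'a \<Rightarrow> 'a \<times> 'a" where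
  "rot c s p = (c *\<^sub>R fst p + s *\<^sub>R snd p, - s *\<^sub>R fst p + c *\<^sub>R snd p)"

lemma rot_measurable[measurable]: "rot c s \<in> measurable (lborel \<Otimes>\<^sub>M lborel) (lborel \<Otimes>\<^sub>M lborel)"
  unfolding rot_def by (rule meas_pair_L2) measurable

lemma nn_integral_rot_lborel:
  fixes G :: "'a::euclidean_space \<times> 'a \<Rightarrow> ennreal"
  assumes G[measurable]: "G \<in> borel_measurable (lborel \<Otimes>\<^sub>M lborel)"
    and cs: "c\<^sup>2 + s\<^sup>2 = 1" "s \<noteq> 0"
  shows "(\<integral>\<^sup>+p. G (rot c s p) \<partial>(lborel \<Otimes>\<^sub>M lborel)) = (\<integral>\<^sup>+p. G p \<partial>(lborel \<Otimes>\<^sub>M lborel))"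
proof -
  define a where "a = (1 - c) / s"
  define b where "b = - s"
  define U where "U = (\<lambda>p::'a \<times> 'a. (fst p + a *\<^sub>R snd p, snd p))"
  define L where "L = (\<lambda>p::'a \<times> 'a. (fst p, snd p + b *\<^sub>R fst p))"
  have ab1: "1 + a * b = c" unfolding a_def b_def using cs by (simp add: field_simps)
  have ab2: "2 * a + a * a * b = s"
  proof -
    have "2 * a + a * a * b = (1 - c) * (1 + c) / s" unfolding a_def b_def using cs by (simp add: field_simps power2_eq_square)
    also have "(1 - c) * (1 + c) = s * s" using cs by (simp add: algebra_simps power2_eq_square)
    finally show ?thesis using cs by simp
  qed
  have R: "rot c s p = U (L (U p))" for p :: "'a \<times> 'a"
  proof -
    have "U (L (U p)) = ((1 + a * b) *\<^sub>R fst p + (2 * a + a * a * b) *\<^sub>R snd p, b *\<^sub>R fst p + (1 + a * b) *\<^sub>R snd p)"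
      unfolding U_def L_def by (simp add: algebra_simps scaleR_add_right scaleR_add_left flip: scaleR_2)
    then show ?thesis unfolding rot_def by (simp only: ab1 ab2) (simp add: b_def)
  qed
  have mU: "U \<in> measurable (lborel \<Otimes>\<^sub>M lborel) (lborel \<Otimes>\<^sub>M lborel)"
    unfolding U_def by (rule meas_pair_L2) measurable
  have mL: "L \<in> measurable (lborel \<Otimes>\<^sub>M lborel) (lborel \<Otimes>\<^sub>M lborel)"
    unfolding L_def by (rule meas_pair_L2) measurable
  define G1 where "G1 = (\<lambda>r. G (U r))"
  define G2 where "G2 = (\<lambda>r. G1 (L r))"
  have mG1: "G1 \<in> borel_measurable (lborel \<Otimes>\<^sub>M lborel)" unfolding G1_def by (rule measurable_compose[OF mU G])
  have mG2: "G2 \<in> borel_measurable (lborel \<Otimes>\<^sub>M lborel)" unfolding G2_def by (rule measurable_compose[OF mL mG1])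
  have "(\<integral>\<^sup>+p. G (rot c s p) \<partial>(lborel \<Otimes>\<^sub>M lborel)) = (\<integral>\<^sup>+p. G2 (U p) \<partial>(lborel \<Otimes>\<^sub>M lborel))"
    by (simp add: R G1_def G2_def)
  also have "\<dots> = (\<integral>\<^sup>+p. G2 p \<partial>(lborel \<Otimes>\<^sub>M lborel))"
    unfolding U_def by (rule shear1[OF mG2])
  also have "\<dots> = (\<integral>\<^sup>+p. G1 (L p) \<partial>(lborel \<Otimes>\<^sub>M lborel))"
    by (simp add: G2_def)
  also have "\<dots> = (\<integral>\<^sup>+p. G1 p \<partial>(lborel \<Otimes>\<^sub>M lborel))"
    unfolding L_def by (rule shear2[OF mG1])
  also have "\<dots> = (\<integral>\<^sup>+p. G (U p) \<partial>(lborel \<Otimes>\<^sub>M lborel))"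
    by (simp add: G1_def)
  also have "\<dots> = (\<integral>\<^sup>+p. G p \<partial>(lborel \<Otimes>\<^sub>M lborel))"
    unfolding U_def by (rule shear1[OF G])
  finally show ?thesis .
qed



abbreviation M2 :: "('a::euclidean_space \<times> 'a) measure" where "M2 \<equiv> gauss \<Otimes>\<^sub>M gauss"

interpretation GG: pair_prob_space "gauss::'a::euclidean_space measure" "gauss::'a measure"
  by unfold_locales

lemma sets_M2[measurable_cong]: "sets (M2::('a::euclidean_space \<times> 'a) measure) = sets (lborel \<Otimes>\<^sub>M lborel)"
  by (rule sets_pair_measure_cong) simp_all

lemma space_M2[simp]: "space (M2::('a::euclidean_space \<times> 'a) measure) = UNIV"
  by (simp add: space_pair_measure)

lemma M2_density: "(M2::('a::euclidean_space \<times> 'a) measure) = density (lborel \<Otimes>\<^sub>M lborel) (\<lambda>(x,z). ennreal (gd x) * ennreal (gd z))"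
  unfolding gauss_eq
  by (rule pair_measure_density) (auto simp: gauss_eq[symmetric] intro: prob_space_imp_sigma_finite prob_space_gauss lborel.sigma_finite_measure_axioms)

lemma norm_rot: 
  fixes x z :: "'a::real_inner"
  assumes "c\<^sup>2 + s\<^sup>2 = 1"
  shows "(norm (c *\<^sub>R x + s *\<^sub>R z))\<^sup>2 + (norm (- s *\<^sub>R x + c *\<^sub>R z))\<^sup>2 = (norm x)\<^sup>2 + (norm z)\<^sup>2"
proof -
  have "(norm (c *\<^sub>R x + s *\<^sub>R z))\<^sup>2 + (norm (- s *\<^sub>R x + c *\<^sub>R z))\<^sup>2 = (c\<^sup>2 + s\<^sup>2) * ((norm x)\<^sup>2 + (norm z)\<^sup>2)"
    unfolding power2_norm_eq_inner by (simp add: inner_add_left inner_add_right inner_commute algebra_simps power2_eq_square)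
  then show ?thesis using assms by simp
qed

lemma gd_rot:
  assumes "c\<^sup>2 + s\<^sup>2 = 1"
  shows "gd (c *\<^sub>R x + s *\<^sub>R z) * gd (- s *\<^sub>R x + c *\<^sub>R z) = gd x * gd (z::'a::euclidean_space)"
proof -
  have "exp (- (norm (c *\<^sub>R x + s *\<^sub>R z))\<^sup>2 / 2) * exp (- (norm (- s *\<^sub>R x + c *\<^sub>R z))\<^sup>2 / 2) = exp (- (norm x)\<^sup>2 / 2) * exp (- (norm z)\<^sup>2 / 2)"
    unfolding exp_add[symmetric] using norm_rot[OF assms, of x z] by (simp add: field_simps)
  then show ?thesis unfolding gd_def by simp
qed

lemma rot_meas_M2[measurable]: "rot c s \<in> measurable (M2::('a::euclidean_space \<times> 'a) measure) M2"
  using rot_measurable by (subst measurable_cong_sets[OF sets_M2 sets_M2])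

lemma rot_1_0: "rot 1 0 = id" by (auto simp: rot_def fun_eq_iff)

lemma distr_rot_M2:
  assumes cs: "c\<^sup>2 + s\<^sup>2 = 1" "s \<noteq> 0 \<or> c = 1"
  shows "distr (M2::('a::euclidean_space \<times> 'a) measure) M2 (rot c s) = M2"
proof (cases "s = 0")
  case True
  with cs have "c = 1" by auto
  with True show ?thesis by (simp add: rot_1_0 distr_id[unfolded id_def] id_def)
next
  case False
  let ?\<Phi> = "\<lambda>(x,z). ennreal (gd x) * ennreal (gd (z::'a))"
  have \<Phi>R: "?\<Phi> (rot c s p) = ?\<Phi> p" for p
    using gd_rot[OF cs(1), of "fst p" "snd p"]
    by (cases p) (simp add: rot_def ennreal_mult[symmetric] gd_nonneg)
  show ?thesis
  proof (rule measure_eqI)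
    fix A assume A: "A \<in> sets (distr (M2::('a \<times> 'a) measure) M2 (rot c s))"
    then have A': "A \<in> sets (lborel \<Otimes>\<^sub>M lborel)" using sets_M2 by simp
    have "emeasure (distr (M2::('a \<times> 'a) measure) M2 (rot c s)) A = emeasure M2 (rot c s -` A)"
      using A by (subst emeasure_distr) auto
    also have "\<dots> = (\<integral>\<^sup>+p. ?\<Phi> p * indicator (rot c s -` A) p \<partial>(lborel \<Otimes>\<^sub>M lborel))"
      unfolding M2_density
    proof (rule emeasure_density)
      show "?\<Phi> \<in> borel_measurable (lborel \<Otimes>\<^sub>M lborel)" by measurable
      show "rot c s -` A \<in> sets (lborel \<Otimes>\<^sub>M lborel)"
        using measurable_sets[OF rot_measurable A', of c s] by (simp add: space_pair_measure)
    qed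
    also have "\<dots> = (\<integral>\<^sup>+p. (\<lambda>q. ?\<Phi> q * indicator A q) (rot c s p) \<partial>(lborel \<Otimes>\<^sub>M lborel))"
      by (intro nn_integral_cong) (simp add: \<Phi>R split: split_indicator)
    also have "\<dots> = (\<integral>\<^sup>+q. ?\<Phi> q * indicator A q \<partial>(lborel \<Otimes>\<^sub>M lborel))"
      by (rule nn_integral_rot_lborel[OF _ cs(1) False]) (use A' in measurable)
    also have "\<dots> = emeasure M2 A"
      unfolding M2_density by (rule emeasure_density[symmetric]) (use A' in measurable)
    finally show "emeasure (distr (M2::('a \<times> 'a) measure) M2 (rot c s)) A = emeasure M2 A" .
  qed simp
qed

lemma integral_rot_M2:
  fixes F :: "'a::euclidean_space \<times> 'a \<Rightarrow> real"
  assumes cs: "c\<^sup>2 + s\<^sup>2 = 1" "s \<noteq> 0 \<or> c = 1" and F[measurable]: "F \<in> borel_measurable M2"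
  shows "(\<integral>p. F (rot c s p) \<partial>M2) = (\<integral>p. F p \<partial>M2)"
proof -
  have "(\<integral>p. F p \<partial>M2) = (\<integral>p. F p \<partial>(distr M2 M2 (rot c s)))" by (simp add: distr_rot_M2[OF cs])
  also have "\<dots> = (\<integral>p. F (rot c s p) \<partial>M2)" by (rule integral_distr) measurable
  finally show ?thesis ..
qed

lemma distr_marg:
  assumes cs: "c\<^sup>2 + s\<^sup>2 = 1" "s \<noteq> 0 \<or> c = 1"
  shows "distr (M2::('a::euclidean_space \<times> 'a) measure) gauss (\<lambda>p. c *\<^sub>R fst p + s *\<^sub>R snd p) = gauss"
proof -
  have "distr (M2::('a \<times> 'a) measure) gauss (\<lambda>p. c *\<^sub>R fst p + s *\<^sub>R snd p) = distr M2 gauss (fst \<circ> rot c s)"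
    by (simp add: rot_def comp_def)
  also have "\<dots> = distr (distr M2 M2 (rot c s)) gauss fst"
    by (rule distr_distr[symmetric]) measurable
  also have "\<dots> = gauss" unfolding distr_rot_M2[OF cs] by (rule G.distr_pair_fst)
  finally show ?thesis .
qed

lemma integral_marg:
  fixes F :: "'a::euclidean_space \<Rightarrow> real"
  assumes cs: "c\<^sup>2 + s\<^sup>2 = 1" "s \<noteq> 0 \<or> c = 1" and F[measurable]: "F \<in> borel_measurable borel"
  shows "(\<integral>p. F (c *\<^sub>R fst p + s *\<^sub>R snd p) \<partial>M2) = (\<integral>x. F x \<partial>gauss)"
proof -
  have "(\<integral>x. F x \<partial>gauss) = (\<integral>x. F x \<partial>(distr (M2::('a \<times> 'a) measure) gauss (\<lambda>p. c *\<^sub>R fst p + s *\<^sub>R snd p)))"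
    by (simp add: distr_marg[OF cs])
  also have "\<dots> = (\<integral>p. F (c *\<^sub>R fst p + s *\<^sub>R snd p) \<partial>M2)" by (rule integral_distr) measurable
  finally show ?thesis ..
qed



interpretation M2P: prob_space "M2::('a::euclidean_space \<times> 'a) measure"
  by (rule prob_space_pair) (rule prob_space_gauss)+

definition Q :: "real \<Rightarrow> ('a::euclidean_space \<Rightarrow> real) \<Rightarrow> 'a \<Rightarrow> real" where
  "Q r k x = (\<integral>z. k (r *\<^sub>R x + sqrt (1 - r\<^sup>2) *\<^sub>R z) \<partial>gauss)"

definition Dcs :: "real \<Rightarrow> real \<Rightarrow> ('a::euclidean_space \<Rightarrow> real) \<Rightarrow> real" where
  "Dcs c s k = (\<integral>p. \<bar>k (c *\<^sub>R fst p + s *\<^sub>R snd p) - k (fst p)\<bar> \<partial>M2)"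

lemma OU_Q: "OU t f = Q (exp (- t)) f"
proof -
  have "exp (- 2 * t) = (exp (- t))\<^sup>2" by (simp add: power2_eq_square exp_add[symmetric])
  then show ?thesis unfolding OU_def Q_def by (simp add: fun_eq_iff)
qed

lemma int_gauss_bounded:
  fixes k :: "'a::euclidean_space \<Rightarrow> real"
  assumes "k \<in> borel_measurable borel" "\<And>x. \<bar>k x\<bar> \<le> B"
  shows "integrable gauss k"
  using assms by (intro G.integrable_const_bound[where B=B]) auto

lemma int_M2_bounded:
  fixes k :: "'a::euclidean_space \<times> 'a \<Rightarrow> real"
  assumes "k \<in> borel_measurable M2" "\<And>x. \<bar>k x\<bar> \<le> B"
  shows "integrable M2 k"
  using assms by (intro GG.integrable_const_bound[where B=B]) auto

lemma Q_meas[measurable]: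
  assumes [measurable]: "k \<in> borel_measurable borel"
  shows "Q r k \<in> borel_measurable borel"
proof -
  have "(\<lambda>x. \<integral>z. (\<lambda>(x, z). k (r *\<^sub>R x + sqrt (1 - r\<^sup>2) *\<^sub>R z)) (x, z) \<partial>gauss) \<in> borel_measurable borel"
    by (rule G.borel_measurable_lebesgue_integral) measurable
  then show ?thesis unfolding Q_def[abs_def] by simp
qed

lemma abs_integral_le_bound:
  fixes k :: "'a::euclidean_space \<Rightarrow> real"
  assumes "k \<in> borel_measurable borel" "\<And>x. \<bar>k x\<bar> \<le> B"
  shows "\<bar>\<integral>x. k x \<partial>gauss\<bar> \<le> B"
proof -
  have "\<bar>\<integral>x. k x \<partial>gauss\<bar> \<le> (\<integral>x. \<bar>k x\<bar> \<partial>gauss)"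
    by (rule integral_abs_bound)
  also have "\<dots> \<le> (\<integral>x. B \<partial>(gauss::'a measure))"
  proof (rule Bochner_Integration.integral_mono)
    show "integrable gauss (\<lambda>x. \<bar>k x\<bar>)" using int_gauss_bounded[OF assms] by simp
  qed (use assms in auto)
  also have "\<dots> = B" by simp
  finally show ?thesis .
qed

lemma Q_bound:
  assumes [measurable]: "k \<in> borel_measurable borel" and B: "\<And>x. \<bar>k x\<bar> \<le> B"
  shows "\<bar>Q r k x\<bar> \<le> B"
  unfolding Q_def by (rule abs_integral_le_bound) (use B in auto)

lemma abs_diff_le2: "\<bar>a\<bar> \<le> B \<Longrightarrow> \<bar>b\<bar> \<le> B \<Longrightarrow> \<bar>a - b\<bar> \<le> 2 * (B::real)"
  by (auto simp: abs_le_iff)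

lemma sigma_cond:
  assumes "0 \<le> r" "r \<le> 1"
  shows "r\<^sup>2 + (sqrt (1 - r\<^sup>2))\<^sup>2 = 1" "sqrt (1 - r\<^sup>2) \<noteq> 0 \<or> r = 1"
proof -
  have "r\<^sup>2 \<le> 1" using assms by (simp add: power_le_one)
  then show "r\<^sup>2 + (sqrt (1 - r\<^sup>2))\<^sup>2 = 1" by simp
  show "sqrt (1 - r\<^sup>2) \<noteq> 0 \<or> r = 1"
  proof (cases "r = 1")
    case False
    then have "r\<^sup>2 < 1" using assms by (simp add: power_less_one_iff abs_square_less_1)
    then show ?thesis by simp
  qed simp
qed

lemma Q_fubini:
  fixes F :: "'a::euclidean_space \<times> 'a \<Rightarrow> real"
  assumes F[measurable]: "F \<in> borel_measurable M2" and FB: "\<And>p. \<bar>F p\<bar> \<le> C"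
  shows "(\<integral>x. (\<integral>z. F (x, z) \<partial>gauss) \<partial>gauss) = (\<integral>p. F p \<partial>M2)"
  by (rule GG.integral_fst'[OF int_M2_bounded[OF F FB]])

lemma Q_contract:
  fixes k1 k2 :: "'a::euclidean_space \<Rightarrow> real"
  assumes [measurable]: "k1 \<in> borel_measurable borel" "k2 \<in> borel_measurable borel"
    and B: "\<And>x. \<bar>k1 x\<bar> \<le> B" "\<And>x. \<bar>k2 x\<bar> \<le> B" and r: "0 \<le> r" "r \<le> 1"
  shows "(\<integral>x. \<bar>Q r k1 x - Q r k2 x\<bar> \<partial>gauss) \<le> (\<integral>x. \<bar>k1 x - k2 x\<bar> \<partial>gauss)"
proof -
  let ?s = "sqrt (1 - r\<^sup>2)"
  have B0: "0 \<le> B" using B(1)[of 0] by linarith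
  have bd: "\<bar>k1 x - k2 x\<bar> \<le> 2 * B" for x using B[of x] by linarith
  have "(\<integral>x. \<bar>Q r k1 x - Q r k2 x\<bar> \<partial>gauss) \<le> (\<integral>x. (\<integral>z. \<bar>k1 (r *\<^sub>R x + ?s *\<^sub>R z) - k2 (r *\<^sub>R x + ?s *\<^sub>R z)\<bar> \<partial>gauss) \<partial>gauss)"
  proof (rule Bochner_Integration.integral_mono)
    show "integrable gauss (\<lambda>x. \<bar>Q r k1 x - Q r k2 x\<bar>)"
      by (rule int_gauss_bounded[where B="2*B"]) (auto intro!: abs_diff_le2 Q_bound B)
    show "integrable gauss (\<lambda>x. \<integral>z. \<bar>k1 (r *\<^sub>R x + ?s *\<^sub>R z) - k2 (r *\<^sub>R x + ?s *\<^sub>R z)\<bar> \<partial>gauss)"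
    proof (rule int_gauss_bounded[where B="2*B"])
      have "(\<lambda>x. \<integral>z. (\<lambda>(x,z). \<bar>k1 (r *\<^sub>R x + ?s *\<^sub>R z) - k2 (r *\<^sub>R x + ?s *\<^sub>R z)\<bar>) (x, z) \<partial>gauss) \<in> borel_measurable borel"
        by (rule G.borel_measurable_lebesgue_integral) measurable
      then show "(\<lambda>x. \<integral>z. \<bar>k1 (r *\<^sub>R x + ?s *\<^sub>R z) - k2 (r *\<^sub>R x + ?s *\<^sub>R z)\<bar> \<partial>gauss) \<in> borel_measurable borel" by simp
      show "\<bar>\<integral>z. \<bar>k1 (r *\<^sub>R x + ?s *\<^sub>R z) - k2 (r *\<^sub>R x + ?s *\<^sub>R z)\<bar> \<partial>gauss\<bar> \<le> 2 * B" for x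
        by (rule abs_integral_le_bound) (use bd in auto)
    qed
    fix x
    have "Q r k1 x - Q r k2 x = (\<integral>z. k1 (r *\<^sub>R x + ?s *\<^sub>R z) - k2 (r *\<^sub>R x + ?s *\<^sub>R z) \<partial>gauss)"
      unfolding Q_def
      by (rule Bochner_Integration.integral_diff[symmetric]; rule int_gauss_bounded[where B=B]) (use B in auto)
    then show "\<bar>Q r k1 x - Q r k2 x\<bar> \<le> (\<integral>z. \<bar>k1 (r *\<^sub>R x + ?s *\<^sub>R z) - k2 (r *\<^sub>R x + ?s *\<^sub>R z)\<bar> \<partial>gauss)"
      by (simp add: integral_abs_bound)
  qed
  also have "\<dots> = (\<integral>p. \<bar>k1 (r *\<^sub>R fst p + ?s *\<^sub>R snd p) - k2 (r *\<^sub>R fst p + ?s *\<^sub>R snd p)\<bar> \<partial>M2)"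
    using Q_fubini[where F="\<lambda>p. \<bar>k1 (r *\<^sub>R fst p + ?s *\<^sub>R snd p) - k2 (r *\<^sub>R fst p + ?s *\<^sub>R snd p)\<bar>" and C="2*B"]
    using bd by simp
  also have "\<dots> = (\<integral>x. \<bar>k1 x - k2 x\<bar> \<partial>gauss)"
    by (rule integral_marg[OF sigma_cond[OF r], where F="\<lambda>x. \<bar>k1 x - k2 x\<bar>"]) measurable
  finally show ?thesis .
qed

lemma Q_diff_le_D:
  fixes k :: "'a::euclidean_space \<Rightarrow> real"
  assumes [measurable]: "k \<in> borel_measurable borel" and B: "\<And>x. \<bar>k x\<bar> \<le> B"
  shows "(\<integral>x. \<bar>Q r k x - k x\<bar> \<partial>gauss) \<le> Dcs r (sqrt (1 - r\<^sup>2)) k"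
proof -
  let ?s = "sqrt (1 - r\<^sup>2)"
  have bd: "\<bar>k x - k y\<bar> \<le> 2 * B" for x y using B[of x] B[of y] by linarith
  have "(\<integral>x. \<bar>Q r k x - k x\<bar> \<partial>gauss) \<le> (\<integral>x. (\<integral>z. \<bar>k (r *\<^sub>R x + ?s *\<^sub>R z) - k x\<bar> \<partial>gauss) \<partial>gauss)"
  proof (rule Bochner_Integration.integral_mono)
    show "integrable gauss (\<lambda>x. \<bar>Q r k x - k x\<bar>)"
      by (rule int_gauss_bounded[where B="2*B"]) (auto intro!: abs_diff_le2 Q_bound B)
    show "integrable gauss (\<lambda>x. \<integral>z. \<bar>k (r *\<^sub>R x + ?s *\<^sub>R z) - k x\<bar> \<partial>gauss)"
    proof (rule int_gauss_bounded[where B="2*B"])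
      have "(\<lambda>x. \<integral>z. (\<lambda>(x,z). \<bar>k (r *\<^sub>R x + ?s *\<^sub>R z) - k x\<bar>) (x, z) \<partial>gauss) \<in> borel_measurable borel"
        by (rule G.borel_measurable_lebesgue_integral) measurable
      then show "(\<lambda>x. \<integral>z. \<bar>k (r *\<^sub>R x + ?s *\<^sub>R z) - k x\<bar> \<partial>gauss) \<in> borel_measurable borel" by simp
      show "\<bar>\<integral>z. \<bar>k (r *\<^sub>R x + ?s *\<^sub>R z) - k x\<bar> \<partial>gauss\<bar> \<le> 2 * B" for x
        by (rule abs_integral_le_bound) (use bd in auto)
    qed
    fix x
    have "Q r k x - k x = (\<integral>z. k (r *\<^sub>R x + ?s *\<^sub>R z) - k x \<partial>gauss)"
      unfolding Q_def
      by (subst Bochner_Integration.integral_diff) (auto intro!: int_gauss_bounded[where B=B] B)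
    then show "\<bar>Q r k x - k x\<bar> \<le> (\<integral>z. \<bar>k (r *\<^sub>R x + ?s *\<^sub>R z) - k x\<bar> \<partial>gauss)"
      by (simp add: integral_abs_bound)
  qed
  also have "\<dots> = Dcs r ?s k"
    unfolding Dcs_def
    using Q_fubini[where F="\<lambda>p. \<bar>k (r *\<^sub>R fst p + ?s *\<^sub>R snd p) - k (fst p)\<bar>" and C="2*B"]
    using bd by simp
  finally show ?thesis .
qed

lemma D_glue:
  fixes k1 k2 :: "'a::euclidean_space \<Rightarrow> real"
  assumes [measurable]: "k1 \<in> borel_measurable borel" "k2 \<in> borel_measurable borel"
    and B: "\<And>x. \<bar>k1 x\<bar> \<le> B" "\<And>x. \<bar>k2 x\<bar> \<le> B" and cs: "c\<^sup>2 + s\<^sup>2 = 1" "s \<noteq> 0 \<or> c = 1"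
  shows "Dcs c s k1 \<le> Dcs c s k2 + 2 * (\<integral>x. \<bar>k1 x - k2 x\<bar> \<partial>gauss)"
proof -
  have bd: "\<bar>k x - k' y\<bar> \<le> 2 * B" if "k = k1 \<or> k = k2" "k' = k1 \<or> k' = k2" for k k' x y
    using that B[of x] B[of y] by auto
  let ?Y = "\<lambda>p::'a \<times> 'a. c *\<^sub>R fst p + s *\<^sub>R snd p"
  have i1: "integrable M2 (\<lambda>p. \<bar>k2 (?Y p) - k2 (fst p)\<bar>)"
    by (rule int_M2_bounded[where B="2*B"]) (use bd in auto)
  have i2: "integrable M2 (\<lambda>p. \<bar>k1 (?Y p) - k2 (?Y p)\<bar>)"
    by (rule int_M2_bounded[where B="2*B"]) (use bd in auto)
  have i3: "integrable M2 (\<lambda>p. \<bar>k1 (fst p) - k2 (fst p)\<bar>)"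
    by (rule int_M2_bounded[where B="2*B"]) (use bd in auto)
  have "Dcs c s k1 \<le> (\<integral>p. \<bar>k2 (?Y p) - k2 (fst p)\<bar> + \<bar>k1 (?Y p) - k2 (?Y p)\<bar> + \<bar>k1 (fst p) - k2 (fst p)\<bar> \<partial>M2)"
    unfolding Dcs_def
  proof (rule Bochner_Integration.integral_mono)
    show "integrable M2 (\<lambda>p. \<bar>k1 (?Y p) - k1 (fst p)\<bar>)"
      by (rule int_M2_bounded[where B="2*B"]) (use bd in auto)
    show "integrable M2 (\<lambda>p. \<bar>k2 (?Y p) - k2 (fst p)\<bar> + \<bar>k1 (?Y p) - k2 (?Y p)\<bar> + \<bar>k1 (fst p) - k2 (fst p)\<bar>)"
      by (intro Bochner_Integration.integrable_add i1 i2 i3)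
  qed auto
  also have "\<dots> = Dcs c s k2 + (\<integral>p. \<bar>k1 (?Y p) - k2 (?Y p)\<bar> \<partial>M2) + (\<integral>p. \<bar>k1 (fst p) - k2 (fst p)\<bar> \<partial>M2)"
    unfolding Dcs_def using i1 i2 i3 by simp
  also have "(\<integral>p. \<bar>k1 (?Y p) - k2 (?Y p)\<bar> \<partial>M2) = (\<integral>x. \<bar>k1 x - k2 x\<bar> \<partial>gauss)"
    by (rule integral_marg[OF cs, where F="\<lambda>x. \<bar>k1 x - k2 x\<bar>"]) measurable
  also have "(\<integral>p. \<bar>k1 (fst p) - k2 (fst p)\<bar> \<partial>M2) = (\<integral>x. \<bar>k1 x - k2 x\<bar> \<partial>gauss)"
    using integral_marg[of 1 0, where F="\<lambda>x. \<bar>k1 x - k2 x\<bar>"] by simp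
  finally show ?thesis by simp
qed



lemma D_zero: "Dcs 1 0 k = 0" unfolding Dcs_def by simp

lemma rot_step:
  "cos t *\<^sub>R (cos a *\<^sub>R x + sin a *\<^sub>R z) + sin t *\<^sub>R (- sin a *\<^sub>R x + cos a *\<^sub>R z) = cos (a + t) *\<^sub>R x + sin (a + t) *\<^sub>R (z::'a::real_vector)"
  by (simp add: cos_add sin_add algebra_simps scaleR_add_right)

lemma rot_cond_angle:
  assumes "0 \<le> a" "a \<le> pi / 2"
  shows "(cos a)\<^sup>2 + (sin a)\<^sup>2 = 1" "sin a \<noteq> 0 \<or> cos a = 1"
proof -
  show "(cos a)\<^sup>2 + (sin a)\<^sup>2 = 1" by simp
  show "sin a \<noteq> 0 \<or> cos a = 1"
  proof (cases "a = 0")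
    case False
    then have "0 < a" "a < pi" using assms pi_gt_zero by linarith+
    then show ?thesis using sin_gt_zero by fastforce
  qed simp
qed

lemma D_path:
  fixes k :: "'a::euclidean_space \<Rightarrow> real"
  assumes [measurable]: "k \<in> borel_measurable borel" and B: "\<And>x. \<bar>k x\<bar> \<le> B"
    and th: "0 \<le> \<theta>" "real N * \<theta> \<le> pi / 2"
  shows "Dcs (cos (real N * \<theta>)) (sin (real N * \<theta>)) k \<le> real N * Dcs (cos \<theta>) (sin \<theta>) k"
  using th(2)
proof (induction N)
  case 0
  then show ?case by (simp add: D_zero)
next
  case (Suc N)
  have th1: "real N * \<theta> \<le> pi / 2" using Suc.prems th(1) by (simp add: distrib_right)
  have bd: "\<bar>k x - k y\<bar> \<le> 2 * B" for x y by (rule abs_diff_le2) (rule B)+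
  let ?a = "real N * \<theta>"
  let ?X = "\<lambda>p::'a \<times> 'a. cos ?a *\<^sub>R fst p + sin ?a *\<^sub>R snd p"
  let ?X' = "\<lambda>p::'a \<times> 'a. cos (?a + \<theta>) *\<^sub>R fst p + sin (?a + \<theta>) *\<^sub>R snd p"
  define F where "F = (\<lambda>p::'a \<times> 'a. \<bar>k (cos \<theta> *\<^sub>R fst p + sin \<theta> *\<^sub>R snd p) - k (fst p)\<bar>)"
  have [measurable]: "F \<in> borel_measurable M2" unfolding F_def by measurable
  have FR: "F (rot (cos ?a) (sin ?a) p) = \<bar>k (?X' p) - k (?X p)\<bar>" for p
    by (simp only: F_def rot_def fst_conv snd_conv rot_step)
  have eq1: "(\<integral>p. \<bar>k (?X' p) - k (?X p)\<bar> \<partial>M2) = Dcs (cos \<theta>) (sin \<theta>) k"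
  proof -
    have "(\<integral>p. \<bar>k (?X' p) - k (?X p)\<bar> \<partial>M2) = (\<integral>p. F (rot (cos ?a) (sin ?a) p) \<partial>M2)" by (simp add: FR)
    also have "\<dots> = (\<integral>p. F p \<partial>M2)"
      by (rule integral_rot_M2) (use rot_cond_angle[of ?a] th1 th(1) in auto)
    finally show ?thesis unfolding F_def Dcs_def .
  qed
  have i1: "integrable M2 (\<lambda>p. \<bar>k (?X' p) - k (?X p)\<bar>)"
    by (rule int_M2_bounded[where B="2*B"]) (use bd in auto)
  have i2: "integrable M2 (\<lambda>p. \<bar>k (?X p) - k (fst p)\<bar>)"
    by (rule int_M2_bounded[where B="2*B"]) (use bd in auto)
  have "Dcs (cos (real (Suc N) * \<theta>)) (sin (real (Suc N) * \<theta>)) k = (\<integral>p. \<bar>k (?X' p) - k (fst p)\<bar> \<partial>M2)"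
    unfolding Dcs_def by (simp add: distrib_right add.commute)
  also have "\<dots> \<le> (\<integral>p. \<bar>k (?X' p) - k (?X p)\<bar> + \<bar>k (?X p) - k (fst p)\<bar> \<partial>M2)"
  proof (rule Bochner_Integration.integral_mono)
    show "integrable M2 (\<lambda>p. \<bar>k (?X' p) - k (fst p)\<bar>)"
      by (rule int_M2_bounded[where B="2*B"]) (use bd in auto)
  qed (use i1 i2 in auto)
  also have "\<dots> = Dcs (cos \<theta>) (sin \<theta>) k + Dcs (cos ?a) (sin ?a) k"
    using i1 i2 eq1 unfolding Dcs_def by simp
  also have "\<dots> \<le> Dcs (cos \<theta>) (sin \<theta>) k + real N * Dcs (cos \<theta>) (sin \<theta>) k"
    using Suc.IH[OF th1] by simp
  finally show ?case by (simp add: algebra_simps)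
qed

definition hfun :: "'a::euclidean_space set \<Rightarrow> real \<Rightarrow> 'a \<Rightarrow> real" where
  "hfun A \<delta> x = max 0 (1 - infdist x A / \<delta>)"

lemma hfun_meas[measurable]: "hfun A \<delta> \<in> borel_measurable borel"
proof -
  have [measurable]: "(\<lambda>x. infdist x A) \<in> borel_measurable borel"
    by (intro borel_measurable_continuous_onI continuous_intros)
  show ?thesis unfolding hfun_def[abs_def] by measurable
qed

lemma hfun_bound: "\<bar>hfun A \<delta> x\<bar> \<le> 1" if "\<delta> > 0"
  using that infdist_nonneg[of x A] unfolding hfun_def by (auto simp: field_simps)

lemma abs_max0: "\<bar>max 0 u - max 0 v\<bar> \<le> \<bar>u - v\<bar>" for u v :: real
  by (cases "u \<le> 0"; cases "v \<le> 0") (auto simp: max_def abs_if)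

lemma hfun_lip:
  assumes "\<delta> > 0"
  shows "\<bar>hfun A \<delta> a - hfun A \<delta> b\<bar> \<le> dist a b / \<delta>"
proof -
  have t: "\<bar>infdist a A - infdist b A\<bar> \<le> dist a b" by (rule infdist_triangle_abs)
  have "\<bar>max 0 (1 - infdist a A / \<delta>) - max 0 (1 - infdist b A / \<delta>)\<bar> \<le> \<bar>(1 - infdist a A / \<delta>) - (1 - infdist b A / \<delta>)\<bar>"
    by (rule abs_max0)
  also have "\<dots> = \<bar>infdist a A - infdist b A\<bar> / \<delta>"
  proof -
    have "(1 - infdist a A / \<delta>) - (1 - infdist b A / \<delta>) = - ((infdist a A - infdist b A) / \<delta>)"
      by (simp add: diff_divide_distrib)
    then show ?thesis using assms by (simp add: abs_divide)
  qed
  also have "\<dots> \<le> dist a b / \<delta>" using t assms by (simp add: divide_right_mono)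
  finally show ?thesis unfolding hfun_def .
qed

lemma hfun_ind:
  assumes "\<delta> > 0" "A \<noteq> {}"
  shows "\<bar>hfun A \<delta> a - indicator A a\<bar> \<le> indicator (nbhd A \<delta> - A) a"
proof (cases "a \<in> A")
  case True
  then show ?thesis unfolding hfun_def by simp
next
  case False
  show ?thesis
  proof (cases "infdist a A \<le> \<delta>")
    case True
    then have "a \<in> nbhd A \<delta> - A" using False assms unfolding nbhd_def by auto
    then show ?thesis using hfun_bound[OF assms(1), of A a] False by simp
  next
    case False2: False
    then have "hfun A \<delta> a = 0" unfolding hfun_def using assms by (simp add: field_simps)
    then show ?thesis using False by simp
  qed
qed

lemma hfun_step:
  assumes "\<delta> > 0"
  shows "hfun A \<delta> (a + w) - hfun A \<delta> a \<le> norm w / \<delta> * indicator {a. a \<notin> A \<and> infdist a A \<le> \<delta> + norm w} a"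
proof (cases "a \<in> A")
  case True
  have "hfun A \<delta> (a + w) \<le> 1" using hfun_bound[OF assms, of A "a + w"] by simp
  then show ?thesis using True assms unfolding hfun_def by simp
next
  case False
  show ?thesis
  proof (cases "infdist a A \<le> \<delta> + norm w")
    case True
    have "hfun A \<delta> (a + w) - hfun A \<delta> a \<le> dist (a + w) a / \<delta>"
      using hfun_lip[OF assms, of A "a + w" a] by simp
    then show ?thesis using True False by (simp add: dist_norm)
  next
    case False2: False
    have "infdist a A \<le> infdist (a + w) A + dist a (a + w)" by (rule infdist_triangle)
    then have "infdist (a + w) A > \<delta>" using False2 by (simp add: dist_norm)
    moreover have "\<delta> < infdist a A" using False2 norm_ge_zero[of w] by linarith
    ultimately have "1 < infdist (a + w) A / \<delta>" "1 < infdist a A / \<delta>"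
      using assms by (simp_all add: less_divide_eq)
    then have "hfun A \<delta> (a + w) = 0" "hfun A \<delta> a = 0"
      unfolding hfun_def by simp_all
    then show ?thesis using False2 by simp
  qed
qed



definition Lfun :: "'a::euclidean_space set \<Rightarrow> real \<Rightarrow> real \<Rightarrow> 'a \<Rightarrow> 'a \<Rightarrow> real" where
  "Lfun A \<delta> r x z = r / sqrt (1 - r\<^sup>2) * (\<integral>y. hfun A \<delta> (r *\<^sub>R x + sqrt (1 - r\<^sup>2) *\<^sub>R y) * (y \<bullet> z) \<partial>gauss)"

lemma sig_pos: "0 < r \<Longrightarrow> r < 1 \<Longrightarrow> 0 < sqrt (1 - r\<^sup>2)"
  by (simp add: power_less_one_iff abs_square_less_1)

lemma u_deriv:
  fixes A :: "'a::euclidean_space set"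
  assumes d: "\<delta> > 0" and r: "0 < r" "r < 1"
    and s: "s \<longlonglongrightarrow> 0" "\<And>N. s N \<noteq> 0" "\<And>N. \<bar>s N\<bar> \<le> 1"
  shows "(\<lambda>N. (Q r (hfun A \<delta>) (x + s N *\<^sub>R z) - Q r (hfun A \<delta>) x) / s N) \<longlonglongrightarrow> Lfun A \<delta> r x z"
proof -
  define \<sigma> where "\<sigma> = sqrt (1 - r\<^sup>2)"
  have \<sigma>: "\<sigma> > 0" unfolding \<sigma>_def using sig_pos r by simp
  define H where "H = (\<lambda>y. hfun A \<delta> (r *\<^sub>R x + \<sigma> *\<^sub>R y))"
  define v where "v = (r / \<sigma>) *\<^sub>R z"
  have [measurable]: "H \<in> borel_measurable borel" unfolding H_def by measurable
  have HK: "\<bar>H y\<bar> \<le> 1 * exp (1 * norm y)" for y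
  proof -
    have "\<bar>H y\<bar> \<le> 1" unfolding H_def by (rule hfun_bound[OF d])
    also have "1 \<le> exp (norm y)" by simp
    finally show ?thesis by simp
  qed
  have Qeq: "Q r (hfun A \<delta>) (x + s' *\<^sub>R z) = (\<integral>y. H (y + s' *\<^sub>R v) \<partial>gauss)" for s'
  proof -
    have "r *\<^sub>R (x + s' *\<^sub>R z) + \<sigma> *\<^sub>R y = r *\<^sub>R x + \<sigma> *\<^sub>R (y + s' *\<^sub>R v)" for y
      unfolding v_def using \<sigma> by (simp add: algebra_simps scaleR_add_right)
    then show ?thesis unfolding Q_def H_def \<sigma>_def by simp
  qed
  have Q0: "Q r (hfun A \<delta>) x = (\<integral>y. H y \<partial>gauss)" unfolding Q_def H_def \<sigma>_def by simp
  have "(\<lambda>N. ((\<integral>y. H (y + s N *\<^sub>R v) \<partial>gauss) - (\<integral>y. H y \<partial>gauss)) / s N) \<longlonglongrightarrow> (\<integral>y. H y * (y \<bullet> v) \<partial>gauss)"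
    by (rule DL[OF _ HK s]) measurable
  moreover have "(\<integral>y. H y * (y \<bullet> v) \<partial>gauss) = Lfun A \<delta> r x z"
  proof -
    have "(\<integral>y. H y * (y \<bullet> v) \<partial>gauss) = (\<integral>y. (r / \<sigma>) * (H y * (y \<bullet> z)) \<partial>gauss)"
      unfolding v_def by (simp add: inner_scaleR_right mult_ac)
    also have "\<dots> = (r / \<sigma>) * (\<integral>y. H y * (y \<bullet> z) \<partial>gauss)" by (rule integral_mult_right_zero)
    finally show ?thesis unfolding Lfun_def H_def \<sigma>_def .
  qed
  ultimately show ?thesis by (simp add: Qeq Q0)
qed

lemma u_lip:
  fixes A :: "'a::euclidean_space set"
  assumes d: "\<delta> > 0" and r: "0 \<le> r" "r \<le> 1"
  shows "\<bar>Q r (hfun A \<delta>) a - Q r (hfun A \<delta>) b\<bar> \<le> dist a b / \<delta>"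
proof -
  define \<sigma> where "\<sigma> = sqrt (1 - r\<^sup>2)"
  have hb: "\<bar>hfun A \<delta> x\<bar> \<le> 1" for x by (rule hfun_bound[OF d])
  have "Q r (hfun A \<delta>) a - Q r (hfun A \<delta>) b = (\<integral>y. hfun A \<delta> (r *\<^sub>R a + \<sigma> *\<^sub>R y) - hfun A \<delta> (r *\<^sub>R b + \<sigma> *\<^sub>R y) \<partial>gauss)"
    unfolding Q_def \<sigma>_def[symmetric]
    by (rule Bochner_Integration.integral_diff[symmetric]; rule int_gauss_bounded[where B=1]) (use hb in auto)
  also have "\<bar>\<dots>\<bar> \<le> dist a b / \<delta>"
  proof (rule abs_integral_le_bound)
    fix y
    have "\<bar>hfun A \<delta> (r *\<^sub>R a + \<sigma> *\<^sub>R y) - hfun A \<delta> (r *\<^sub>R b + \<sigma> *\<^sub>R y)\<bar> \<le> dist (r *\<^sub>R a + \<sigma> *\<^sub>R y) (r *\<^sub>R b + \<sigma> *\<^sub>R y) / \<delta>"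
      by (rule hfun_lip[OF d])
    also have "dist (r *\<^sub>R a + \<sigma> *\<^sub>R y) (r *\<^sub>R b + \<sigma> *\<^sub>R y) = r * dist a b"
      using r by (simp add: dist_norm scaleR_diff_right[symmetric])
    also have "r * dist a b \<le> dist a b" using r by (simp add: mult_left_le_one_le)
    finally show "\<bar>hfun A \<delta> (r *\<^sub>R a + \<sigma> *\<^sub>R y) - hfun A \<delta> (r *\<^sub>R b + \<sigma> *\<^sub>R y)\<bar> \<le> dist a b / \<delta>"
      using d by (simp add: divide_right_mono)
  qed measurable
  finally show ?thesis .
qed

lemma u_cont: "\<delta> > 0 \<Longrightarrow> 0 \<le> r \<Longrightarrow> r \<le> 1 \<Longrightarrow> continuous_on UNIV (Q r (hfun (A::'a::euclidean_space set) \<delta>))"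
  unfolding continuous_on_iff
proof (intro ballI allI impI)
  fix x :: 'a and e :: real
  assume d: "\<delta> > 0" and r: "0 \<le> r" "r \<le> 1" and e: "0 < e"
  show "\<exists>d>0. \<forall>x'\<in>UNIV. dist x' x < d \<longrightarrow> dist (Q r (hfun A \<delta>) x') (Q r (hfun A \<delta>) x) < e"
  proof (intro exI[of _ "e * \<delta>"] conjI ballI impI)
    show "0 < e * \<delta>" using d e by simp
    fix x' :: 'a assume "dist x' x < e * \<delta>"
    then have "dist x' x / \<delta> < e" using d by (simp add: divide_less_eq)
    then show "dist (Q r (hfun A \<delta>) x') (Q r (hfun A \<delta>) x) < e"
      using u_lip[OF d r, of A x' x] by (simp add: dist_real_def)
  qed
qed

lemma u_meas[measurable]: "\<delta> > 0 \<Longrightarrow> 0 \<le> r \<Longrightarrow> r \<le> 1 \<Longrightarrow> Q r (hfun (A::'a::euclidean_space set) \<delta>) \<in> borel_measurable borel"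
  by (rule borel_measurable_continuous_onI) (rule u_cont)



definition PS :: "'a::euclidean_space set \<Rightarrow> real \<Rightarrow> real \<Rightarrow> 'a \<Rightarrow> real" where
  "PS A \<delta> r x = (\<integral>y. indicator (nbhd A \<delta> - A) (r *\<^sub>R x + sqrt (1 - r\<^sup>2) *\<^sub>R y) \<partial>gauss)"

lemma infdist_meas[measurable]: "(\<lambda>x. infdist x A) \<in> borel_measurable borel"
  by (intro borel_measurable_continuous_onI continuous_intros)

lemma nbhd_sets[measurable]: "nbhd A \<delta> \<in> sets (borel :: 'a::euclidean_space measure)"
proof -
  have "nbhd A \<delta> = {x \<in> space borel. A \<noteq> {} \<and> infdist x A \<le> \<delta>}" unfolding nbhd_def by simp
  also have "\<dots> \<in> sets borel" by measurable
  finally show ?thesis .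
qed

lemma L_upper:
  fixes A :: "'a::euclidean_space set"
  assumes A[measurable]: "A \<in> sets borel" and Ane: "A \<noteq> {}" and d: "\<delta> > 0" and r: "0 < r" "r < 1"
  shows "Lfun A \<delta> r x z \<le> r / \<delta> * norm z * PS A \<delta> r x"
proof -
  define \<sigma> where "\<sigma> = sqrt (1 - r\<^sup>2)"
  define s where "s = (\<lambda>n::nat. inverse (real (Suc n)))"
  have s: "s \<longlonglongrightarrow> 0" "\<And>N. s N \<noteq> 0" "\<And>N. \<bar>s N\<bar> \<le> 1" "\<And>N. s N > 0"
    unfolding s_def using LIMSEQ_inverse_real_of_nat by (auto simp: inverse_le_1_iff)
  define c where "c = (\<lambda>n. \<delta> + r * s n * norm z)"
  define V where "V = (\<lambda>n. {a. a \<notin> A \<and> infdist a A \<le> c n})"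
  define Y where "Y = (\<lambda>n. {y. r *\<^sub>R x + \<sigma> *\<^sub>R y \<in> V n})"
  have hb: "\<bar>hfun A \<delta> x\<bar> \<le> 1" for x by (rule hfun_bound[OF d])
  have Vmeas[measurable]: "V n \<in> sets borel" for n
  proof -
    have "V n = {a \<in> space borel. a \<notin> A \<and> infdist a A \<le> c n}" unfolding V_def by simp
    also have "\<dots> \<in> sets borel" by measurable
    finally show ?thesis .
  qed
  have Ymeas: "Y n \<in> sets gauss" for n
  proof -
    have "Y n = {y \<in> space borel. indicator (V n) (r *\<^sub>R x + \<sigma> *\<^sub>R y) = (1::real)}"
      unfolding Y_def by (auto simp: indicator_def)
    also have "\<dots> \<in> sets borel" by measurable
    finally show ?thesis by simp
  qed
  let ?q = "\<lambda>n. (Q r (hfun A \<delta>) (x + s n *\<^sub>R z) - Q r (hfun A \<delta>) x) / s n"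
  let ?p = "\<lambda>n. measure gauss (Y n)"
  have q_lim: "?q \<longlonglongrightarrow> Lfun A \<delta> r x z" by (rule u_deriv[OF d r s(1-3)])
  have p_eq: "measure gauss (Y n) = (\<integral>y. indicator (V n) (r *\<^sub>R x + \<sigma> *\<^sub>R y) \<partial>gauss)" for n
  proof -
    have "(\<integral>y. indicator (V n) (r *\<^sub>R x + \<sigma> *\<^sub>R y) \<partial>gauss) = (\<integral>y. indicator (Y n) y \<partial>(gauss::'a measure))"
      unfolding Y_def by (intro Bochner_Integration.integral_cong) (auto simp: indicator_def)
    also have "\<dots> = measure gauss (Y n)" by simp
    finally show ?thesis ..
  qed
  have q_le: "?q n \<le> r / \<delta> * norm z * ?p n" for n
  proof -
    have eq: "r *\<^sub>R (x + s n *\<^sub>R z) + \<sigma> *\<^sub>R y = (r *\<^sub>R x + \<sigma> *\<^sub>R y) + (r * s n) *\<^sub>R z" for y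
      by (simp add: algebra_simps scaleR_add_right)
    have "Q r (hfun A \<delta>) (x + s n *\<^sub>R z) - Q r (hfun A \<delta>) x
        = (\<integral>y. hfun A \<delta> ((r *\<^sub>R x + \<sigma> *\<^sub>R y) + (r * s n) *\<^sub>R z) - hfun A \<delta> (r *\<^sub>R x + \<sigma> *\<^sub>R y) \<partial>gauss)"
      unfolding Q_def \<sigma>_def[symmetric] eq
      by (rule Bochner_Integration.integral_diff[symmetric]; rule int_gauss_bounded[where B=1]) (use hb in auto)
    also have "\<dots> \<le> (\<integral>y. norm ((r * s n) *\<^sub>R z) / \<delta> * indicator (V n) (r *\<^sub>R x + \<sigma> *\<^sub>R y) \<partial>gauss)"
    proof (rule Bochner_Integration.integral_mono)
      show "integrable gauss (\<lambda>y. hfun A \<delta> ((r *\<^sub>R x + \<sigma> *\<^sub>R y) + (r * s n) *\<^sub>R z) - hfun A \<delta> (r *\<^sub>R x + \<sigma> *\<^sub>R y))"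
        by (rule int_gauss_bounded[where B=2]) (use hb abs_diff_le2[OF hb hb] in auto)
      show "integrable gauss (\<lambda>y. norm ((r * s n) *\<^sub>R z) / \<delta> * indicator (V n) (r *\<^sub>R x + \<sigma> *\<^sub>R y))"
        by (rule int_gauss_bounded[where B="norm ((r * s n) *\<^sub>R z) / \<delta>"]) (use d in \<open>auto simp: indicator_def\<close>)
      fix y
      have "norm ((r * s n) *\<^sub>R z) = r * s n * norm z" using r s(4)[of n] by simp
      then show "hfun A \<delta> ((r *\<^sub>R x + \<sigma> *\<^sub>R y) + (r * s n) *\<^sub>R z) - hfun A \<delta> (r *\<^sub>R x + \<sigma> *\<^sub>R y)
          \<le> norm ((r * s n) *\<^sub>R z) / \<delta> * indicator (V n) (r *\<^sub>R x + \<sigma> *\<^sub>R y)"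
      proof -
        have ab: "\<bar>r * s n\<bar> = r * s n" using r s(4)[of n] by simp
        show ?thesis
          using hfun_step[OF d, of A "r *\<^sub>R x + \<sigma> *\<^sub>R y" "(r * s n) *\<^sub>R z"] unfolding V_def c_def by (simp add: ab)
      qed
    qed
    also have "\<dots> = norm ((r * s n) *\<^sub>R z) / \<delta> * ?p n" by (simp add: p_eq)
    also have "\<dots> = s n * (r / \<delta> * norm z * ?p n)" using r s(4)[of n] by simp
    finally show ?thesis using s(4)[of n] by (simp add: divide_le_eq mult.commute)
  qed
  have p_lim: "?p \<longlonglongrightarrow> measure gauss (\<Inter>n. Y n)"
  proof (rule G.finite_Lim_measure_decseq)
    show "range Y \<subseteq> sets gauss" using Ymeas by auto
    show "decseq Y"
    proof (rule decseq_SucI)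
      fix n
      have "s (Suc n) \<le> s n" unfolding s_def by (simp add: field_simps)
      then have "c (Suc n) \<le> c n" unfolding c_def using r
        by (simp add: mult_left_mono mult_right_mono)
      then show "Y (Suc n) \<subseteq> Y n" unfolding Y_def V_def by auto
    qed
  qed
  have cap: "(\<Inter>n. Y n) = {y. r *\<^sub>R x + \<sigma> *\<^sub>R y \<in> nbhd A \<delta> - A}"
  proof -
    have "c \<longlonglongrightarrow> \<delta> + r * 0 * norm z" unfolding c_def by (intro tendsto_intros s(1))
    then have cl: "c \<longlonglongrightarrow> \<delta>" by simp
    have cge: "c n \<ge> \<delta>" for n unfolding c_def using r s(4)[of n] by simp
    have "(\<forall>n. t \<le> c n) \<longleftrightarrow> t \<le> \<delta>" for t
    proof
      assume "\<forall>n. t \<le> c n" then show "t \<le> \<delta>" using cl by (intro LIMSEQ_le_const) auto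
    next
      assume "t \<le> \<delta>" then show "\<forall>n. t \<le> c n" using cge order_trans by blast
    qed
    then show ?thesis unfolding Y_def V_def nbhd_def using Ane by auto
  qed
  have "measure gauss (\<Inter>n. Y n) = PS A \<delta> r x"
    unfolding cap PS_def \<sigma>_def[symmetric]
  proof -
    have "(\<integral>y. indicator (nbhd A \<delta> - A) (r *\<^sub>R x + \<sigma> *\<^sub>R y) \<partial>gauss) = (\<integral>y. indicator {y. r *\<^sub>R x + \<sigma> *\<^sub>R y \<in> nbhd A \<delta> - A} y \<partial>(gauss::'a measure))"
      by (intro Bochner_Integration.integral_cong) (auto simp: indicator_def)
    also have "\<dots> = measure gauss {y. r *\<^sub>R x + \<sigma> *\<^sub>R y \<in> nbhd A \<delta> - A}" by simp
    finally show "measure gauss {y. r *\<^sub>R x + \<sigma> *\<^sub>R y \<in> nbhd A \<delta> - A} = (\<integral>y. indicator (nbhd A \<delta> - A) (r *\<^sub>R x + \<sigma> *\<^sub>R y) \<partial>gauss)" ..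
  qed
  with p_lim have p_lim': "?p \<longlonglongrightarrow> PS A \<delta> r x" by simp
  show ?thesis
    by (rule LIMSEQ_le[OF q_lim tendsto_mult_left[OF p_lim']]) (use q_le in auto)
qed



lemma int_h_inner:
  assumes d: "\<delta> > 0"
  shows "integrable gauss (\<lambda>y. hfun A \<delta> (a + \<sigma> *\<^sub>R y) * (y \<bullet> (b::'a::euclidean_space)))"
proof (rule Bochner_Integration.integrable_bound[OF integrable_mult_right[OF integrable_norm_gauss, of "norm b"]])
  show "AE y in gauss. norm (hfun A \<delta> (a + \<sigma> *\<^sub>R y) * (y \<bullet> b)) \<le> norm (norm b * norm y)"
  proof (intro AE_I2)
    fix y :: 'a
    have "\<bar>hfun A \<delta> (a + \<sigma> *\<^sub>R y)\<bar> * \<bar>y \<bullet> b\<bar> \<le> 1 * (norm y * norm b)"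
      by (intro mult_mono hfun_bound[OF d] Cauchy_Schwarz_ineq2) auto
    then show "norm (hfun A \<delta> (a + \<sigma> *\<^sub>R y) * (y \<bullet> b)) \<le> norm (norm b * norm y)"
      by (simp add: abs_mult mult.commute)
  qed
qed measurable

lemma L_linear:
  assumes d: "\<delta> > 0"
  shows "Lfun A \<delta> r x z = (\<Sum>b\<in>Basis. (z \<bullet> b) * Lfun A \<delta> r x (b::'a::euclidean_space))"
proof -
  define \<sigma> where "\<sigma> = sqrt (1 - r\<^sup>2)"
  let ?h = "\<lambda>y. hfun A \<delta> (r *\<^sub>R x + \<sigma> *\<^sub>R y)"
  have "(\<integral>y. ?h y * (y \<bullet> z) \<partial>gauss) = (\<integral>y. (\<Sum>b\<in>Basis. (z \<bullet> b) * (?h y * (y \<bullet> b))) \<partial>gauss)"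
  proof (intro Bochner_Integration.integral_cong refl)
    fix y :: 'a
    have "y \<bullet> z = (\<Sum>b\<in>Basis. (y \<bullet> b) * (z \<bullet> b))" by (rule euclidean_inner)
    then show "?h y * (y \<bullet> z) = (\<Sum>b\<in>Basis. (z \<bullet> b) * (?h y * (y \<bullet> b)))"
      by (simp add: sum_distrib_left sum_distrib_right mult_ac)
  qed
  also have "\<dots> = (\<Sum>b\<in>Basis. (z \<bullet> b) * (\<integral>y. ?h y * (y \<bullet> b) \<partial>gauss))"
    by (subst Bochner_Integration.integral_sum) (auto intro!: integrable_mult_right int_h_inner[OF d])
  finally show ?thesis unfolding Lfun_def \<sigma>_def[symmetric] by (simp add: sum_distrib_left mult_ac)
qed

definition Wv :: "'a::euclidean_space set \<Rightarrow> real \<Rightarrow> real \<Rightarrow> 'a \<Rightarrow> 'a" where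
  "Wv A \<delta> r x = (\<Sum>b\<in>Basis. Lfun A \<delta> r x b *\<^sub>R b)"

lemma L_Wv: "\<delta> > 0 \<Longrightarrow> Lfun A \<delta> r x z = z \<bullet> Wv A \<delta> r x"
  unfolding Wv_def by (subst L_linear) (auto simp: inner_sum_right mult.commute)

lemma PS_nonneg: "0 \<le> PS A \<delta> r x"
  unfolding PS_def by (rule Bochner_Integration.integral_nonneg) (simp add: indicator_def)

lemma Wv_bound:
  fixes A :: "'a::euclidean_space set"
  assumes A[measurable]: "A \<in> sets borel" and Ane: "A \<noteq> {}" and d: "\<delta> > 0" and r: "0 < r" "r < 1"
  shows "norm (Wv A \<delta> r x) \<le> r / \<delta> * PS A \<delta> r x"
proof (cases "Wv A \<delta> r x = 0")
  case True then show ?thesis using PS_nonneg[of A \<delta> r x] r d by simp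
next
  case False
  let ?W = "Wv A \<delta> r x"
  have "(norm ?W)\<^sup>2 = Lfun A \<delta> r x ?W" by (simp add: L_Wv[OF d] power2_norm_eq_inner)
  also have "\<dots> \<le> r / \<delta> * norm ?W * PS A \<delta> r x" by (rule L_upper[OF A Ane d r])
  finally have "norm ?W * norm ?W \<le> norm ?W * (r / \<delta> * PS A \<delta> r x)" by (simp add: power2_eq_square mult_ac)
  moreover have "norm ?W > 0" using False by simp
  ultimately show ?thesis using mult_le_cancel_left_pos by blast
qed

lemma L_inner_int:
  fixes A :: "'a::euclidean_space set"
  assumes A[measurable]: "A \<in> sets borel" and Ane: "A \<noteq> {}" and d: "\<delta> > 0" and r: "0 < r" "r < 1"
  shows "integrable gauss (\<lambda>z. \<bar>Lfun A \<delta> r x z\<bar>) \<and> (\<integral>z. \<bar>Lfun A \<delta> r x z\<bar> \<partial>gauss) \<le> r / \<delta> * PS A \<delta> r x"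
  using abs_inner_gauss[of "Wv A \<delta> r x"] Wv_bound[OF A Ane d r, of x] by (simp add: L_Wv[OF d])



lemma one_minus_cos_le: "1 - cos t \<le> t\<^sup>2 / 2" for t :: real
proof -
  have c: "cos t = 1 - 2 * (sin (t / 2))\<^sup>2" using cos_double_sin[of "t / 2"] by simp
  have "\<bar>sin (t / 2)\<bar> \<le> \<bar>t / 2\<bar>" by (rule abs_sin_x_le_abs_x)
  then have "\<bar>sin (t / 2)\<bar>\<^sup>2 \<le> \<bar>t / 2\<bar>\<^sup>2" by (rule power_mono) simp
  then have "(sin (t / 2))\<^sup>2 \<le> (t / 2)\<^sup>2" by (simp only: power2_abs)
  then show ?thesis unfolding c by (simp add: power_divide)
qed

lemma integrable_M2_fst:
  fixes f :: "'a::euclidean_space \<Rightarrow> real"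
  assumes [measurable]: "f \<in> borel_measurable borel" and "integrable gauss f"
  shows "integrable M2 (\<lambda>p. f (fst p))" "integrable M2 (\<lambda>p. f (snd p))"
proof -
  have fg: "f \<in> borel_measurable gauss" by simp
  have "integrable (distr (M2::('a \<times> 'a) measure) gauss (\<lambda>p. 1 *\<^sub>R fst p + 0 *\<^sub>R snd p)) f"
  proof -
    have "distr (M2::('a \<times> 'a) measure) gauss (\<lambda>p. 1 *\<^sub>R fst p + 0 *\<^sub>R snd p) = gauss" by (rule distr_marg) simp_all
    then show ?thesis using assms by simp
  qed
  moreover have m1: "(\<lambda>p::'a\<times>'a. 1 *\<^sub>R fst p + 0 *\<^sub>R snd p) \<in> measurable M2 gauss" by measurable
  ultimately show "integrable M2 (\<lambda>p. f (fst p))" using integrable_distr_eq[OF m1 fg] by simp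
  have "integrable (distr (M2::('a \<times> 'a) measure) gauss (\<lambda>p. 0 *\<^sub>R fst p + 1 *\<^sub>R snd p)) f"
  proof -
    have "distr (M2::('a \<times> 'a) measure) gauss (\<lambda>p. 0 *\<^sub>R fst p + 1 *\<^sub>R snd p) = gauss" by (rule distr_marg) simp_all
    then show ?thesis using assms by simp
  qed
  moreover have m2: "(\<lambda>p::'a\<times>'a. 0 *\<^sub>R fst p + 1 *\<^sub>R snd p) \<in> measurable M2 gauss" by measurable
  ultimately show "integrable M2 (\<lambda>p. f (snd p))" using integrable_distr_eq[OF m2 fg] by simp
qed

lemma PS_meas[measurable]:
  fixes A :: "'a::euclidean_space set"
  assumes [measurable]: "A \<in> sets borel"
  shows "PS A \<delta> r \<in> borel_measurable borel"
proof -
  have "(\<lambda>x. \<integral>y. (\<lambda>(x,y). indicator (nbhd A \<delta> - A) (r *\<^sub>R x + sqrt (1 - r\<^sup>2) *\<^sub>R y) :: real) (x, y) \<partial>gauss) \<in> borel_measurable borel"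
    by (rule G.borel_measurable_lebesgue_integral) measurable
  then show ?thesis unfolding PS_def[abs_def] by simp
qed

lemma PS_int:
  fixes A :: "'a::euclidean_space set"
  assumes [measurable]: "A \<in> sets borel" and r: "0 \<le> r" "r \<le> 1"
  shows "(\<integral>x. PS A \<delta> r x \<partial>gauss) = measure gauss (nbhd A \<delta> - A)"
proof -
  let ?s = "sqrt (1 - r\<^sup>2)"
  have "(\<integral>x. PS A \<delta> r x \<partial>gauss) = (\<integral>p. indicator (nbhd A \<delta> - A) (r *\<^sub>R fst p + ?s *\<^sub>R snd p) \<partial>(M2::('a \<times> 'a) measure))"
  proof -
    have eq: "(\<integral>x. (\<integral>z. (\<lambda>p. indicator (nbhd A \<delta> - A) (r *\<^sub>R fst p + ?s *\<^sub>R snd p) :: real) (x, z) \<partial>gauss) \<partial>gauss)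
       = (\<integral>p. (\<lambda>p. indicator (nbhd A \<delta> - A) (r *\<^sub>R fst p + ?s *\<^sub>R snd p) :: real) p \<partial>(M2::('a \<times> 'a) measure))"
      by (rule Q_fubini[where C=1]) (auto simp: indicator_def)
    then show ?thesis unfolding PS_def by simp
  qed
  also have "\<dots> = (\<integral>x. indicator (nbhd A \<delta> - A) x \<partial>(gauss::'a measure))"
    by (rule integral_marg[OF sigma_cond[OF r]]) measurable
  also have "\<dots> = measure gauss (nbhd A \<delta> - A)" by simp
  finally show ?thesis .
qed



lemma sin_over_lim:
  fixes \<theta> :: "nat \<Rightarrow> real"
  assumes "\<theta> \<longlonglongrightarrow> 0" "\<And>N. \<theta> N \<noteq> 0"
  shows "(\<lambda>N. sin (\<theta> N) / \<theta> N) \<longlonglongrightarrow> 1"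
proof -
  have "(sin has_real_derivative cos 0) (at 0)" by (rule DERIV_sin)
  then have "((\<lambda>h. (sin (0 + h) - sin 0) / h) \<longlongrightarrow> cos 0) (at (0::real))" by (simp add: DERIV_def)
  then have "((\<lambda>h::real. sin h / h) \<longlongrightarrow> 1) (at (0::real))" by simp
  moreover have "filterlim \<theta> (at 0) sequentially" using assms by (auto simp: filterlim_at)
  ultimately show ?thesis by (rule filterlim_compose)
qed

lemma D_u_bound:
  fixes A :: "'a::euclidean_space set"
  assumes A[measurable]: "A \<in> sets borel" and Ane: "A \<noteq> {}" and d: "\<delta> > 0" and r: "0 < r" "r < 1"
    and ph: "0 < \<phi>" "\<phi> \<le> pi / 2"
  shows "Dcs (cos \<phi>) (sin \<phi>) (Q r (hfun A \<delta>)) \<le> \<phi> * (r / \<delta> * measure gauss (nbhd A \<delta> - A))"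
proof -
  define u where "u = Q r (hfun A \<delta>)"
  have um[measurable]: "u \<in> borel_measurable borel" unfolding u_def using d r by (intro u_meas) auto
  have ulip: "\<bar>u a - u b\<bar> \<le> dist a b / \<delta>" for a b unfolding u_def by (rule u_lip) (use d r in auto)
  have ub: "\<bar>u x\<bar> \<le> 1" for x unfolding u_def by (rule Q_bound[OF _ hfun_bound[OF d]]) simp
  define \<theta> where "\<theta> = (\<lambda>N::nat. \<phi> / real (Suc N))"
  have \<theta>pos: "0 < \<theta> N" for N unfolding \<theta>_def using ph by simp
  have \<theta>le: "\<theta> N \<le> \<phi>" for N unfolding \<theta>_def using ph by (simp add: divide_le_eq)
  have \<theta>le2: "\<theta> N \<le> pi / 2" for N using \<theta>le[of N] ph by simp
  have \<theta>lim: "\<theta> \<longlonglongrightarrow> 0"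
  proof -
    have "(\<lambda>N. \<phi> * inverse (real (Suc N))) \<longlonglongrightarrow> \<phi> * 0"
      by (intro tendsto_mult tendsto_const LIMSEQ_inverse_real_of_nat)
    then show ?thesis unfolding \<theta>_def by (simp add: divide_inverse)
  qed
  define F where "F = (\<lambda>N (p::'a\<times>'a). \<bar>u (cos (\<theta> N) *\<^sub>R fst p + sin (\<theta> N) *\<^sub>R snd p) - u (fst p)\<bar> / \<theta> N)"
  define Lim where "Lim = (\<lambda>p::'a\<times>'a. \<bar>Lfun A \<delta> r (fst p) (snd p)\<bar>)"
  define w where "w = (\<lambda>p::'a\<times>'a. (norm (fst p) + norm (snd p)) / \<delta>)"
  have Fm[measurable]: "F N \<in> borel_measurable M2" for N unfolding F_def by measurable
  have step1: "Dcs (cos \<phi>) (sin \<phi>) u \<le> \<phi> * (\<integral>p. F N p \<partial>M2)" for N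
  proof -
    have e: "real (Suc N) * \<theta> N = \<phi>" unfolding \<theta>_def by simp
    have "Dcs (cos (real (Suc N) * \<theta> N)) (sin (real (Suc N) * \<theta> N)) u \<le> real (Suc N) * Dcs (cos (\<theta> N)) (sin (\<theta> N)) u"
      by (rule D_path[OF um ub]) (use \<theta>pos[of N] ph e in auto)
    then have "Dcs (cos \<phi>) (sin \<phi>) u \<le> real (Suc N) * Dcs (cos (\<theta> N)) (sin (\<theta> N)) u"
      unfolding e .
    also have "Dcs (cos (\<theta> N)) (sin (\<theta> N)) u = \<theta> N * (\<integral>p. F N p \<partial>M2)"
      unfolding F_def Dcs_def using \<theta>pos[of N] by simp
    also have "real (Suc N) * (\<theta> N * (\<integral>p. F N p \<partial>M2)) = \<phi> * (\<integral>p. F N p \<partial>M2)"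
      by (simp only: e mult.assoc[symmetric])
    finally show ?thesis .
  qed
  have bound: "\<bar>F N p\<bar> \<le> w p" for N p
  proof -
    obtain x z where p: "p = (x, z)" by (cases p)
    let ?t = "\<theta> N"
    have c1: "1 - cos ?t \<le> ?t"
    proof -
      have "1 - cos ?t \<le> ?t\<^sup>2 / 2" by (rule one_minus_cos_le)
      also have "?t\<^sup>2 / 2 \<le> ?t"
      proof -
        have "?t \<le> 2" using \<theta>le2[of N] pi_less_4 by linarith
        then have "?t * ?t \<le> 2 * ?t" using \<theta>pos[of N] by (intro mult_right_mono) auto
        then show ?thesis by (simp add: power2_eq_square)
      qed
      finally show ?thesis .
    qed
    have c0: "0 \<le> 1 - cos ?t" by simp
    have s1: "sin ?t \<le> ?t" using \<theta>pos[of N] by (intro sin_x_le_x) simp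
    have s0: "0 \<le> sin ?t" using \<theta>pos[of N] \<theta>le2[of N] by (intro sin_ge_zero) auto
    have "\<bar>u (cos ?t *\<^sub>R x + sin ?t *\<^sub>R z) - u x\<bar> \<le> dist (cos ?t *\<^sub>R x + sin ?t *\<^sub>R z) x / \<delta>" by (rule ulip)
    also have "dist (cos ?t *\<^sub>R x + sin ?t *\<^sub>R z) x = norm (sin ?t *\<^sub>R z - (1 - cos ?t) *\<^sub>R x)"
      by (simp add: dist_norm algebra_simps)
    also have "\<dots> \<le> norm (sin ?t *\<^sub>R z) + norm ((1 - cos ?t) *\<^sub>R x)" by (rule norm_triangle_ineq4)
    also have "\<dots> = sin ?t * norm z + (1 - cos ?t) * norm x" using s0 c0 by simp
    also have "\<dots> \<le> ?t * norm z + ?t * norm x" by (intro add_mono mult_right_mono s1 c1) auto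
    finally have "\<bar>u (cos ?t *\<^sub>R x + sin ?t *\<^sub>R z) - u x\<bar> \<le> (?t * norm z + ?t * norm x) / \<delta>"
      using d by (simp add: divide_right_mono)
    then have "\<bar>u (cos ?t *\<^sub>R x + sin ?t *\<^sub>R z) - u x\<bar> / ?t \<le> (norm x + norm z) / \<delta>"
      using \<theta>pos[of N] d by (simp add: divide_le_eq field_simps)
    then show ?thesis unfolding F_def w_def p using \<theta>pos[of N] by simp
  qed
  have wint: "integrable M2 w"
  proof -
    have "integrable M2 (\<lambda>p::'a\<times>'a. norm (fst p))" "integrable M2 (\<lambda>p::'a\<times>'a. norm (snd p))"
      by (rule integrable_M2_fst[OF _ integrable_norm_gauss]; measurable)+
    then show ?thesis unfolding w_def by (intro integrable_divide Bochner_Integration.integrable_add)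
  qed
  have conv: "(\<lambda>N. F N p) \<longlonglongrightarrow> Lim p" for p
  proof -
    obtain x z where p: "p = (x, z)" by (cases p)
    define s where "s = (\<lambda>N. sin (\<theta> N))"
    have s0: "0 < s N" for N unfolding s_def using \<theta>pos[of N] \<theta>le2[of N] pi_gt_zero
      by (intro sin_gt_zero) linarith+
    have s: "s \<longlonglongrightarrow> 0" "\<And>N. s N \<noteq> 0" "\<And>N. \<bar>s N\<bar> \<le> 1"
    proof -
      show "s \<longlonglongrightarrow> 0" unfolding s_def using tendsto_sin[OF \<theta>lim] by simp
      show "s N \<noteq> 0" for N using s0[of N] by simp
      show "\<bar>s N\<bar> \<le> 1" for N unfolding s_def by (rule abs_sin_le_one)
    qed
    have a: "(\<lambda>N. (u (x + s N *\<^sub>R z) - u x) / s N) \<longlonglongrightarrow> Lfun A \<delta> r x z"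
      unfolding u_def by (rule u_deriv[OF d r s])
    have b: "(\<lambda>N. s N / \<theta> N) \<longlonglongrightarrow> 1"
      unfolding s_def by (rule sin_over_lim[OF \<theta>lim]) (use \<theta>pos in \<open>simp add: less_imp_neq[symmetric]\<close>)
    define e where "e = (\<lambda>N. (u (cos (\<theta> N) *\<^sub>R x + s N *\<^sub>R z) - u (x + s N *\<^sub>R z)) / \<theta> N)"
    have e: "e \<longlonglongrightarrow> 0"
    proof (rule Lim_null_comparison)
      show "\<forall>\<^sub>F N in sequentially. norm (e N) \<le> \<theta> N * norm x / (2 * \<delta>)"
      proof (intro always_eventually allI)
        fix N
        have "\<bar>u (cos (\<theta> N) *\<^sub>R x + s N *\<^sub>R z) - u (x + s N *\<^sub>R z)\<bar> \<le> dist (cos (\<theta> N) *\<^sub>R x + s N *\<^sub>R z) (x + s N *\<^sub>R z) / \<delta>"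
          by (rule ulip)
        also have "dist (cos (\<theta> N) *\<^sub>R x + s N *\<^sub>R z) (x + s N *\<^sub>R z) = (1 - cos (\<theta> N)) * norm x"
        proof -
          have "dist (cos (\<theta> N) *\<^sub>R x + s N *\<^sub>R z) (x + s N *\<^sub>R z) = norm ((1 - cos (\<theta> N)) *\<^sub>R x)"
            by (simp add: dist_norm algebra_simps norm_minus_commute)
          then show ?thesis by simp
        qed
        also have "(1 - cos (\<theta> N)) * norm x \<le> ((\<theta> N)\<^sup>2 / 2) * norm x"
          by (intro mult_right_mono one_minus_cos_le) simp
        finally have "\<bar>u (cos (\<theta> N) *\<^sub>R x + s N *\<^sub>R z) - u (x + s N *\<^sub>R z)\<bar> \<le> ((\<theta> N)\<^sup>2 / 2) * norm x / \<delta>"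
          using d by (simp add: divide_right_mono)
        then show "norm (e N) \<le> \<theta> N * norm x / (2 * \<delta>)"
          unfolding e_def using \<theta>pos[of N] d by (simp add: abs_divide divide_le_eq power2_eq_square field_simps)
      qed
      have "(\<lambda>N. \<theta> N * norm x / (2 * \<delta>)) \<longlonglongrightarrow> 0 * norm x / (2 * \<delta>)"
        by (intro tendsto_intros \<theta>lim) (use d in simp)
      then show "(\<lambda>N. \<theta> N * norm x / (2 * \<delta>)) \<longlonglongrightarrow> 0" by simp
    qed
    have eq: "(u (cos (\<theta> N) *\<^sub>R x + sin (\<theta> N) *\<^sub>R z) - u x) / \<theta> N = (u (x + s N *\<^sub>R z) - u x) / s N * (s N / \<theta> N) + e N" for N
      unfolding e_def s_def using \<theta>pos[of N] s0[of N] unfolding s_def by (simp add: field_simps)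
    have "(\<lambda>N. (u (x + s N *\<^sub>R z) - u x) / s N * (s N / \<theta> N) + e N) \<longlonglongrightarrow> Lfun A \<delta> r x z * 1 + 0"
      by (intro tendsto_intros a b e)
    then have "(\<lambda>N. (u (cos (\<theta> N) *\<^sub>R x + sin (\<theta> N) *\<^sub>R z) - u x) / \<theta> N) \<longlonglongrightarrow> Lfun A \<delta> r x z"
      by (simp add: eq)
    then have "(\<lambda>N. \<bar>(u (cos (\<theta> N) *\<^sub>R x + sin (\<theta> N) *\<^sub>R z) - u x) / \<theta> N\<bar>) \<longlonglongrightarrow> \<bar>Lfun A \<delta> r x z\<bar>"
      by (rule tendsto_rabs)
    then show ?thesis unfolding F_def Lim_def p using \<theta>pos by (simp add: abs_divide less_imp_le)
  qed
  have Limm[measurable]: "Lim \<in> borel_measurable M2"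
    by (rule borel_measurable_LIMSEQ_real[where u=F]) (use conv in auto)
  have LimInt: "integrable M2 Lim"
    by (rule integrable_dominated_convergence[where w=w and s=F, OF Limm Fm wint]) (use conv bound in auto)
  have Flim: "(\<lambda>N. \<integral>p. F N p \<partial>M2) \<longlonglongrightarrow> (\<integral>p. Lim p \<partial>M2)"
    by (rule integral_dominated_convergence[where w=w and s=F, OF Limm Fm wint]) (use conv bound in auto)
  have step7: "Dcs (cos \<phi>) (sin \<phi>) u \<le> \<phi> * (\<integral>p. Lim p \<partial>M2)"
    by (rule LIMSEQ_le_const[OF tendsto_mult_left[OF Flim]]) (use step1 in auto)
  have "(\<integral>p. Lim p \<partial>M2) = (\<integral>x. (\<integral>z. Lim (x, z) \<partial>gauss) \<partial>gauss)"
    by (rule GG.integral_fst'[OF LimInt, symmetric])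
  also have "\<dots> \<le> (\<integral>x. r / \<delta> * PS A \<delta> r x \<partial>gauss)"
  proof (rule Bochner_Integration.integral_mono)
    show "integrable gauss (\<lambda>x. \<integral>z. Lim (x, z) \<partial>gauss)" by (rule GG.integrable_fst'[OF LimInt])
    show "integrable gauss (\<lambda>x. r / \<delta> * PS A \<delta> r x)"
    proof (rule integrable_mult_right, rule int_gauss_bounded[where B=1])
      show "\<bar>PS A \<delta> r x\<bar> \<le> 1" for x
        unfolding PS_def by (rule abs_integral_le_bound) (auto simp: indicator_def)
    qed measurable
    fix x
    show "(\<integral>z. Lim (x, z) \<partial>gauss) \<le> r / \<delta> * PS A \<delta> r x"
      unfolding Lim_def using L_inner_int[OF A Ane d r, of x] by simp
  qed
  also have "\<dots> = r / \<delta> * measure gauss (nbhd A \<delta> - A)"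
    using PS_int[OF A, of r \<delta>] r by simp
  finally have "(\<integral>p. Lim p \<partial>M2) \<le> r / \<delta> * measure gauss (nbhd A \<delta> - A)" .
  then have "\<phi> * (\<integral>p. Lim p \<partial>M2) \<le> \<phi> * (r / \<delta> * measure gauss (nbhd A \<delta> - A))"
    using ph by (intro mult_left_mono) auto
  with step7 show ?thesis unfolding u_def by simp
qed



lemma ind_bound: "\<bar>indicator A x :: real\<bar> \<le> 1" by (simp add: indicator_def)

lemma hfun_ind_int:
  fixes A :: "'a::euclidean_space set"
  assumes A[measurable]: "A \<in> sets borel" and Ane: "A \<noteq> {}" and d: "\<delta> > 0"
  shows "(\<integral>x. \<bar>indicator A x - hfun A \<delta> x\<bar> \<partial>gauss) \<le> measure gauss (nbhd A \<delta> - A)"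
proof -
  have "(\<integral>x. \<bar>indicator A x - hfun A \<delta> x\<bar> \<partial>gauss) \<le> (\<integral>x. indicator (nbhd A \<delta> - A) x \<partial>(gauss::'a measure))"
  proof (rule Bochner_Integration.integral_mono)
    show "integrable gauss (\<lambda>x. \<bar>indicator A x - hfun A \<delta> x\<bar>)"
    proof (rule int_gauss_bounded[where B="2*1"])
      show "\<bar>\<bar>indicator A x - hfun A \<delta> x\<bar>\<bar> \<le> (2::real) * 1" for x :: 'a using abs_diff_le2[OF ind_bound hfun_bound[OF d]] by simp
    qed measurable
    show "integrable gauss (\<lambda>x. indicator (nbhd A \<delta> - A) x :: real)"
      by (rule int_gauss_bounded[where B=1]) (auto simp: indicator_def)
    fix x
    show "\<bar>indicator A x - hfun A \<delta> x\<bar> \<le> indicator (nbhd A \<delta> - A) x"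
      using hfun_ind[OF d Ane, of x] by (simp add: abs_minus_commute)
  qed
  also have "\<dots> = measure gauss (nbhd A \<delta> - A)" by simp
  finally show ?thesis .
qed

lemma Dh_small:
  fixes A :: "'a::euclidean_space set"
  assumes d: "\<delta> > 0" and r: "0 \<le> r" "r \<le> 1"
  shows "Dcs r (sqrt (1 - r\<^sup>2)) (hfun A \<delta>) \<le> ((1 - r) + sqrt (1 - r\<^sup>2)) * (\<integral>x. norm x \<partial>(gauss::'a measure)) / \<delta>"
proof -
  let ?s = "sqrt (1 - r\<^sup>2)"
  let ?K = "\<integral>x. norm x \<partial>(gauss::'a measure)"
  have iK: "integrable M2 (\<lambda>p::'a\<times>'a. norm (fst p))" "integrable M2 (\<lambda>p::'a\<times>'a. norm (snd p))"
    by (rule integrable_M2_fst[OF _ integrable_norm_gauss]; measurable)+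
  have "Dcs r ?s (hfun A \<delta>) \<le> (\<integral>p. ((1 - r) * norm (fst p) + ?s * norm (snd p)) / \<delta> \<partial>(M2::('a\<times>'a) measure))"
    unfolding Dcs_def
  proof (rule Bochner_Integration.integral_mono)
    show "integrable M2 (\<lambda>p::'a\<times>'a. \<bar>hfun A \<delta> (r *\<^sub>R fst p + ?s *\<^sub>R snd p) - hfun A \<delta> (fst p)\<bar>)"
    proof (rule int_M2_bounded[where B="2*1"])
      show "\<bar>\<bar>hfun A \<delta> (r *\<^sub>R fst p + ?s *\<^sub>R snd p) - hfun A \<delta> (fst p)\<bar>\<bar> \<le> 2 * 1" for p :: "'a \<times> 'a"
        using abs_diff_le2[OF hfun_bound[OF d] hfun_bound[OF d]] by simp
    qed measurable
    show "integrable M2 (\<lambda>p::'a\<times>'a. ((1 - r) * norm (fst p) + ?s * norm (snd p)) / \<delta>)"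
      using iK by (intro integrable_divide Bochner_Integration.integrable_add integrable_mult_right)
    fix p :: "'a \<times> 'a"
    have "\<bar>hfun A \<delta> (r *\<^sub>R fst p + ?s *\<^sub>R snd p) - hfun A \<delta> (fst p)\<bar> \<le> dist (r *\<^sub>R fst p + ?s *\<^sub>R snd p) (fst p) / \<delta>"
      by (rule hfun_lip[OF d])
    also have "dist (r *\<^sub>R fst p + ?s *\<^sub>R snd p) (fst p) = norm (?s *\<^sub>R snd p - (1 - r) *\<^sub>R fst p)"
      by (simp add: dist_norm algebra_simps)
    also have "\<dots> \<le> norm (?s *\<^sub>R snd p) + norm ((1 - r) *\<^sub>R fst p)" by (rule norm_triangle_ineq4)
    also have "\<dots> = (1 - r) * norm (fst p) + ?s * norm (snd p)"
    proof -
      have "r\<^sup>2 \<le> 1" using r by (simp add: power_le_one)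
      then have "\<bar>?s\<bar> = ?s" by simp
      then show ?thesis using r by simp
    qed
    finally show "\<bar>hfun A \<delta> (r *\<^sub>R fst p + ?s *\<^sub>R snd p) - hfun A \<delta> (fst p)\<bar> \<le> ((1 - r) * norm (fst p) + ?s * norm (snd p)) / \<delta>"
      using d by (simp add: divide_right_mono)
  qed
  also have "\<dots> = ((1 - r) * (\<integral>p. norm (fst p) \<partial>(M2::('a\<times>'a) measure)) + ?s * (\<integral>p. norm (snd p) \<partial>(M2::('a\<times>'a) measure))) / \<delta>"
    using iK by simp
  also have "(\<integral>p. norm (fst p) \<partial>(M2::('a\<times>'a) measure)) = ?K"
    using integral_marg[of 1 0 norm] by simp
  also have "(\<integral>p. norm (snd p) \<partial>(M2::('a\<times>'a) measure)) = ?K"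
    using integral_marg[of 0 1 norm] by simp
  finally show ?thesis by (simp add: algebra_simps)
qed

lemma D_ind_r:
  fixes A :: "'a::euclidean_space set"
  assumes A[measurable]: "A \<in> sets borel" and Ane: "A \<noteq> {}" and d: "\<delta> > 0" and r: "0 < r" "r < 1"
    and ph: "0 < \<phi>" "\<phi> \<le> pi / 2"
  shows "Dcs (cos \<phi>) (sin \<phi>) (indicator A) \<le> \<phi> * (measure gauss (nbhd A \<delta> - A) / \<delta>) + 2 * measure gauss (nbhd A \<delta> - A)
     + 2 * (((1 - r) + sqrt (1 - r\<^sup>2)) * (\<integral>x. norm x \<partial>(gauss::'a measure)) / \<delta>)"
proof -
  let ?m = "measure gauss (nbhd A \<delta> - A)"
  let ?h = "hfun A \<delta>"
  let ?u = "Q r (hfun A \<delta>)"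
  have cs: "(cos \<phi>)\<^sup>2 + (sin \<phi>)\<^sup>2 = 1" "sin \<phi> \<noteq> 0 \<or> cos \<phi> = 1" using rot_cond_angle[of \<phi>] ph by auto
  have hb: "\<bar>?h x\<bar> \<le> 1" for x by (rule hfun_bound[OF d])
  have ub: "\<bar>?u x\<bar> \<le> 1" for x by (rule Q_bound[OF _ hb]) simp
  have um[measurable]: "?u \<in> borel_measurable borel" using d r by (intro u_meas) auto
  have "Dcs (cos \<phi>) (sin \<phi>) (indicator A) \<le> Dcs (cos \<phi>) (sin \<phi>) ?h + 2 * (\<integral>x. \<bar>indicator A x - ?h x\<bar> \<partial>gauss)"
    by (rule D_glue[OF _ _ ind_bound hb cs]) measurable
  also have "(\<integral>x. \<bar>indicator A x - ?h x\<bar> \<partial>gauss) \<le> ?m" by (rule hfun_ind_int[OF A Ane d])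
  also have "Dcs (cos \<phi>) (sin \<phi>) ?h \<le> Dcs (cos \<phi>) (sin \<phi>) ?u + 2 * (\<integral>x. \<bar>?h x - ?u x\<bar> \<partial>gauss)"
    by (rule D_glue[OF _ _ hb ub cs]) measurable
  also have "Dcs (cos \<phi>) (sin \<phi>) ?u \<le> \<phi> * (r / \<delta> * ?m)" by (rule D_u_bound[OF A Ane d r ph])
  also have "\<phi> * (r / \<delta> * ?m) \<le> \<phi> * (?m / \<delta>)"
  proof -
    have "r * ?m \<le> 1 * ?m" using r by (intro mult_right_mono) auto
    then have "r / \<delta> * ?m \<le> ?m / \<delta>" using d by (simp add: divide_right_mono)
    then show ?thesis using ph by (intro mult_left_mono) auto
  qed
  also have "(\<integral>x. \<bar>?h x - ?u x\<bar> \<partial>gauss) = (\<integral>x. \<bar>?u x - ?h x\<bar> \<partial>gauss)" by (simp add: abs_minus_commute)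
  also have "\<dots> \<le> Dcs r (sqrt (1 - r\<^sup>2)) ?h" by (rule Q_diff_le_D[OF _ hb]) simp
  also have "\<dots> \<le> ((1 - r) + sqrt (1 - r\<^sup>2)) * (\<integral>x. norm x \<partial>(gauss::'a measure)) / \<delta>"
    by (rule Dh_small[OF d]) (use r in auto)
  finally show ?thesis by simp
qed



lemma D_ind_lim:
  fixes A :: "'a::euclidean_space set"
  assumes A[measurable]: "A \<in> sets borel" and Ane: "A \<noteq> {}" and d: "\<delta> > 0"
    and ph: "0 < \<phi>" "\<phi> \<le> pi / 2"
  shows "Dcs (cos \<phi>) (sin \<phi>) (indicator A) \<le> \<phi> * (measure gauss (nbhd A \<delta> - A) / \<delta>) + 2 * measure gauss (nbhd A \<delta> - A)"
proof -
  let ?c = "\<phi> * (measure gauss (nbhd A \<delta> - A) / \<delta>) + 2 * measure gauss (nbhd A \<delta> - A)"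
  let ?K = "\<integral>x. norm x \<partial>(gauss::'a measure)"
  define r where "r = (\<lambda>n::nat. 1 - inverse (real n + 2))"
  have r: "0 < r n" "r n < 1" for n unfolding r_def by (auto simp: inverse_less_1_iff)
  have rl: "r \<longlonglongrightarrow> 1"
  proof -
    have "(\<lambda>n. inverse (real n + 2)) \<longlonglongrightarrow> 0"
      using LIMSEQ_ignore_initial_segment[OF LIMSEQ_inverse_real_of_nat, of 1] by (simp add: add.commute)
    then have "(\<lambda>n. 1 - inverse (real n + 2)) \<longlonglongrightarrow> 1 - 0" by (intro tendsto_intros)
    then show ?thesis unfolding r_def by simp
  qed
  have "(\<lambda>n. ?c + 2 * (((1 - r n) + sqrt (1 - (r n)\<^sup>2)) * ?K / \<delta>)) \<longlonglongrightarrow> ?c + 2 * (((1 - 1) + sqrt (1 - 1\<^sup>2)) * ?K / \<delta>)"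
    by (intro tendsto_intros rl) (use d in simp)
  then have lim: "(\<lambda>n. ?c + 2 * (((1 - r n) + sqrt (1 - (r n)\<^sup>2)) * ?K / \<delta>)) \<longlonglongrightarrow> ?c" by simp
  show ?thesis
    by (rule LIMSEQ_le_const[OF lim]) (use D_ind_r[OF A Ane d r ph] in auto)
qed

lemma exists_good_delta:
  fixes A :: "'a::euclidean_space set"
  assumes g: "gsurf A \<le> ereal B" and BB: "B < B'" and d0: "\<delta>0 > 0"
  shows "\<exists>\<delta>. 0 < \<delta> \<and> \<delta> < \<delta>0 \<and> measure gauss (nbhd A \<delta> - A) / \<delta> < B'"
proof (rule ccontr)
  assume neg: "\<not> ?thesis"
  have H: "B' \<le> measure (gauss::'a measure) (nbhd A \<delta> - A) / \<delta>" if "0 < \<delta>" "\<delta> < \<delta>0" for \<delta>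
  proof (rule ccontr)
    assume "\<not> B' \<le> measure (gauss::'a measure) (nbhd A \<delta> - A) / \<delta>"
    then have "measure (gauss::'a measure) (nbhd A \<delta> - A) / \<delta> < B'" by simp
    with that neg show False by blast
  qed
  have "eventually (\<lambda>\<delta>. ereal B' \<le> ereal (measure (gauss::'a measure) (nbhd A \<delta> - A) / \<delta>)) (at_right 0)"
    unfolding eventually_at_right_field
  proof (intro exI[of _ \<delta>0] conjI allI impI)
    fix \<delta> :: real assume "0 < \<delta>" "\<delta> < \<delta>0"
    then show "ereal B' \<le> ereal (measure (gauss::'a measure) (nbhd A \<delta> - A) / \<delta>)" using H by simp
  qed (rule d0)
  then have "ereal B' \<le> gsurf A" unfolding gsurf_def by (rule Liminf_bounded)
  then have "ereal B' \<le> ereal B" using g by (rule order_trans)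
  with BB show False by simp
qed

lemma measure_nonneg': "0 \<le> measure (gauss::'a::euclidean_space measure) S" by simp

lemma D_ind_final:
  fixes A :: "'a::euclidean_space set"
  assumes A[measurable]: "A \<in> sets borel" and ph: "0 < \<phi>" "\<phi> \<le> pi / 2"
    and B: "B > 0" and g: "gsurf A \<le> ereal B"
  shows "Dcs (cos \<phi>) (sin \<phi>) (indicator A) \<le> \<phi> * B"
proof (cases "A = {}")
  case True
  then show ?thesis using ph B unfolding Dcs_def by simp
next
  case Ane: False
  show ?thesis
  proof (rule field_le_epsilon)
    fix e :: real assume e: "0 < e"
    define B' where "B' = B + e / (2 * \<phi>)"
    have BB: "B < B'" unfolding B'_def using e ph by simp
    have B'pos: "B' > 0" using BB B by simp
    define \<delta>0 where "\<delta>0 = e / (2 * (2 * B'))"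
    have d0: "\<delta>0 > 0" unfolding \<delta>0_def using e B'pos by simp
    obtain \<delta> where d: "0 < \<delta>" "\<delta> < \<delta>0" and mB: "measure gauss (nbhd A \<delta> - A) / \<delta> < B'"
      using exists_good_delta[OF g BB d0] by auto
    let ?m = "measure gauss (nbhd A \<delta> - A)"
    have m_le: "?m \<le> B' * \<delta>" using mB d by (simp add: divide_less_eq less_imp_le)
    have "2 * ?m \<le> 2 * (B' * \<delta>0)"
    proof -
      have "B' * \<delta> \<le> B' * \<delta>0" using d B'pos by (intro mult_left_mono) auto
      then show ?thesis using m_le by linarith
    qed
    also have "2 * (B' * \<delta>0) = e / 2" unfolding \<delta>0_def using B'pos by (simp add: field_simps)
    finally have m2: "2 * ?m \<le> e / 2" .
    have "Dcs (cos \<phi>) (sin \<phi>) (indicator A) \<le> \<phi> * (?m / \<delta>) + 2 * ?m"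
      by (rule D_ind_lim[OF A Ane d(1) ph])
    also have "\<phi> * (?m / \<delta>) \<le> \<phi> * B'" using mB ph by (intro mult_left_mono) auto
    also have "\<phi> * B' = \<phi> * B + e / 2" unfolding B'_def using ph by (simp add: field_simps)
    finally show "Dcs (cos \<phi>) (sin \<phi>) (indicator A) \<le> \<phi> * B + e" using m2 by linarith
  qed
qed

lemma sin_ge_x_cos: "0 \<le> u \<Longrightarrow> u \<le> pi \<Longrightarrow> u * cos u \<le> sin u"
proof -
  assume u: "0 \<le> u" "u \<le> pi"
  let ?g = "\<lambda>x. sin x - x * cos x"
  have "?g 0 \<le> ?g u"
  proof (rule DERIV_nonneg_imp_nondecreasing[OF u(1)])
    fix x assume x: "0 \<le> x" "x \<le> u"
    have "(?g has_real_derivative (x * sin x)) (at x)"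
      by (auto intro!: derivative_eq_intros simp: algebra_simps)
    moreover have "0 \<le> x * sin x" using x u by (intro mult_nonneg_nonneg sin_ge_zero) auto
    ultimately show "\<exists>y. (?g has_real_derivative y) (at x) \<and> 0 \<le> y" by blast
  qed
  then show ?thesis by simp
qed

lemma cos_le_exp: "0 \<le> u \<Longrightarrow> u \<le> pi / 2 \<Longrightarrow> cos u \<le> exp (- u\<^sup>2 / 2)"
proof -
  assume u: "0 \<le> u" "u \<le> pi / 2"
  let ?f = "\<lambda>x. exp (x\<^sup>2 / 2) * cos x"
  have "?f u \<le> ?f 0"
  proof (rule DERIV_nonpos_imp_nonincreasing[OF u(1)])
    fix x assume x: "0 \<le> x" "x \<le> u"
    have "(?f has_real_derivative (exp (x\<^sup>2 / 2) * (x * cos x - sin x))) (at x)"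
      by (auto intro!: derivative_eq_intros simp: algebra_simps power2_eq_square)
    moreover have "exp (x\<^sup>2 / 2) * (x * cos x - sin x) \<le> 0"
      using sin_ge_x_cos[of x] x u by (intro mult_nonneg_nonpos) auto
    ultimately show "\<exists>y. (?f has_real_derivative y) (at x) \<and> y \<le> 0" by blast
  qed
  then have "exp (u\<^sup>2 / 2) * cos u \<le> 1" by simp
  then have "exp (- u\<^sup>2 / 2) * (exp (u\<^sup>2 / 2) * cos u) \<le> exp (- u\<^sup>2 / 2) * 1"
    by (intro mult_left_mono) auto
  then show ?thesis by (simp add: mult.assoc[symmetric] exp_add[symmetric])
qed

lemma arccos_exp_le: "t \<ge> 0 \<Longrightarrow> arccos (exp (- t)) \<le> sqrt (2 * t)"
proof -
  assume t: "t \<ge> 0"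
  have e: "0 < exp (- t)" "exp (- t) \<le> 1" using t by auto
  show ?thesis
  proof (cases "sqrt (2 * t) \<le> pi / 2")
    case True
    let ?u = "sqrt (2 * t)"
    have u0: "0 \<le> ?u" using t by simp
    have "?u\<^sup>2 = 2 * t" using t by simp
    then have "cos ?u \<le> exp (- t)" using cos_le_exp[OF u0 True] by simp
    then have "arccos (exp (- t)) \<le> arccos (cos ?u)"
      by (intro arccos_le_arccos) (use e in auto)
    also have "arccos (cos ?u) = ?u"
    proof (rule arccos_cos)
      show "0 \<le> ?u" by (rule u0)
      show "?u \<le> pi" using True pi_gt_zero by linarith
    qed
    finally show ?thesis .
  next
    case False
    have "arccos (exp (- t)) \<le> pi / 2"
    proof -
      have "arccos (exp (- t)) \<le> arccos 0" by (intro arccos_le_arccos) (use e in auto)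
      then show ?thesis by simp
    qed
    then show ?thesis using False by simp
  qed
qed



lemma sqrt2_bound: "sqrt 2 < (1415 / 1000 :: real)"
proof -
  have "sqrt 2 < sqrt ((1415 / 1000 :: real)\<^sup>2)" by (rule real_sqrt_less_mono) (simp add: power2_eq_square)
  then show ?thesis by simp
qed

lemma Q_diff_sq:
  fixes k :: "'a::euclidean_space \<Rightarrow> real"
  assumes [measurable]: "k \<in> borel_measurable borel" "k' \<in> borel_measurable borel"
    and "\<And>x. \<bar>k x\<bar> \<le> 1" "\<And>x. \<bar>k' x\<bar> \<le> 1"
  shows "(\<integral>x. (k x - k' x)\<^sup>2 \<partial>gauss) \<le> 2 * (\<integral>x. \<bar>k x - k' x\<bar> \<partial>gauss)"
proof -
  have b: "\<bar>k x - k' x\<bar> \<le> 2 * 1" for x by (rule abs_diff_le2) (use assms in auto)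
  have "(\<integral>x. (k x - k' x)\<^sup>2 \<partial>gauss) \<le> (\<integral>x. 2 * \<bar>k x - k' x\<bar> \<partial>gauss)"
  proof (rule Bochner_Integration.integral_mono)
    show "integrable gauss (\<lambda>x. (k x - k' x)\<^sup>2)"
    proof (rule int_gauss_bounded[where B="2*2"])
      show "\<bar>(k x - k' x)\<^sup>2\<bar> \<le> 2 * 2" for x
      proof -
        have "\<bar>k x - k' x\<bar>\<^sup>2 \<le> (2 * 1)\<^sup>2" by (rule power_mono[OF b]) simp
        then show ?thesis by simp
      qed
    qed measurable
    show "integrable gauss (\<lambda>x. 2 * \<bar>k x - k' x\<bar>)"
    proof (rule int_gauss_bounded[where B="2*2"])
      show "\<bar>2 * \<bar>k x - k' x\<bar>\<bar> \<le> 2 * 2" for x using b[of x] by simp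
    qed measurable
    fix x
    have "(k x - k' x)\<^sup>2 = \<bar>k x - k' x\<bar> * \<bar>k x - k' x\<bar>" by (simp add: power2_eq_square abs_mult_self_eq)
    also have "\<dots> \<le> 2 * \<bar>k x - k' x\<bar>" using b[of x] by (intro mult_right_mono) auto
    finally show "(k x - k' x)\<^sup>2 \<le> 2 * \<bar>k x - k' x\<bar>" .
  qed
  also have "\<dots> = 2 * (\<integral>x. \<bar>k x - k' x\<bar> \<partial>gauss)" by simp
  finally show ?thesis .
qed

lemma abs2: "\<bar>(2 * a - 1) - (2 * b - 1)\<bar> = 2 * \<bar>a - b\<bar>" for a b :: real
proof -
  have "(2 * a - 1) - (2 * b - 1) = 2 * (a - b)" by simp
  then show ?thesis by (simp only: abs_mult)
qed

lemma triangle_int: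
  fixes a b c d :: "'a::euclidean_space \<Rightarrow> real"
  assumes [measurable]: "a \<in> borel_measurable borel" "b \<in> borel_measurable borel" "c \<in> borel_measurable borel" "d \<in> borel_measurable borel"
    and B: "\<And>x. \<bar>a x\<bar> \<le> 1" "\<And>x. \<bar>b x\<bar> \<le> 1" "\<And>x. \<bar>c x\<bar> \<le> 1" "\<And>x. \<bar>d x\<bar> \<le> 1"
  shows "(\<integral>x. \<bar>a x - d x\<bar> \<partial>gauss) \<le> (\<integral>x. \<bar>a x - b x\<bar> \<partial>gauss) + (\<integral>x. \<bar>b x - c x\<bar> \<partial>gauss) + (\<integral>x. \<bar>c x - d x\<bar> \<partial>gauss)"
proof -
  have i: "integrable gauss (\<lambda>x. \<bar>p x - q x\<bar>)" if "p \<in> borel_measurable borel" "q \<in> borel_measurable borel" "\<And>x. \<bar>p x\<bar> \<le> 1" "\<And>x. \<bar>q x\<bar> \<le> 1" for p q :: "'a \<Rightarrow> real"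
  proof (rule int_gauss_bounded[where B="2*1"])
    show "\<bar>\<bar>p x - q x\<bar>\<bar> \<le> 2 * 1" for x using abs_diff_le2[OF that(3) that(4)] by simp
  qed (use that in measurable)
  have "(\<integral>x. \<bar>a x - d x\<bar> \<partial>gauss) \<le> (\<integral>x. \<bar>a x - b x\<bar> + \<bar>b x - c x\<bar> + \<bar>c x - d x\<bar> \<partial>gauss)"
    by (rule Bochner_Integration.integral_mono)
       (auto intro!: i Bochner_Integration.integrable_add B)
  also have "\<dots> = (\<integral>x. \<bar>a x - b x\<bar> \<partial>gauss) + (\<integral>x. \<bar>b x - c x\<bar> \<partial>gauss) + (\<integral>x. \<bar>c x - d x\<bar> \<partial>gauss)"
    by (simp add: i B)
  finally show ?thesis .
qed

theorem proposition3p9: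
  fixes f :: "'a::euclidean_space \<Rightarrow> real" and \<epsilon> s t :: real
  assumes "\<epsilon> > 0" and "s > 0" and "t = \<epsilon> ^ 4 / (900 * s\<^sup>2)"
    and "f \<in> borel_measurable borel" and "\<forall>x. f x \<in> {-1, 1}"
    and "smooth ((\<epsilon> / 30)\<^sup>2) s f"
  shows "(\<integral>x. (OU t f x - f x)\<^sup>2 \<partial>gauss) \<le> \<epsilon>\<^sup>2 / 5"
proof -
  note fm[measurable] = assms(4)
  have fb: "\<bar>f x\<bar> \<le> 1" for x using assms(5)[rule_format, of x] by auto
  define \<rho> where "\<rho> = exp (- t)"
  define \<eta> where "\<eta> = (\<epsilon> / 30)\<^sup>2"
  define E where "E = \<epsilon>\<^sup>2"
  have Epos: "E > 0" unfolding E_def using assms(1) by simp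
  have tpos: "t > 0" using assms(1,2,3) by simp
  have \<rho>: "0 < \<rho>" "\<rho> < 1" unfolding \<rho>_def using tpos by auto
  have OUQ: "OU t f = Q \<rho> f" unfolding \<rho>_def by (rule OU_Q)
  have Qm[measurable]: "Q \<rho> f \<in> borel_measurable borel" by measurable
  have Qb: "\<bar>Q \<rho> f x\<bar> \<le> 1" for x by (rule Q_bound[OF fm fb])
  have sq: "(\<integral>x. (OU t f x - f x)\<^sup>2 \<partial>gauss) \<le> 2 * (\<integral>x. \<bar>Q \<rho> f x - f x\<bar> \<partial>gauss)"
    unfolding OUQ by (rule Q_diff_sq[OF Qm fm Qb fb])
  show ?thesis
  proof (cases "E \<ge> 20")
    case True
    have "(\<integral>x. (OU t f x - f x)\<^sup>2 \<partial>gauss) \<le> (\<integral>x. 4 \<partial>(gauss::'a measure))"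
    proof (rule Bochner_Integration.integral_mono)
      have b: "\<bar>Q \<rho> f x - f x\<bar> \<le> 2 * 1" for x by (rule abs_diff_le2[OF Qb fb])
      have b2: "(Q \<rho> f x - f x)\<^sup>2 \<le> 4" for x
      proof -
        have "\<bar>Q \<rho> f x - f x\<bar>\<^sup>2 \<le> (2 * 1)\<^sup>2" by (rule power_mono[OF b]) simp
        then show ?thesis by simp
      qed
      show "integrable gauss (\<lambda>x. (OU t f x - f x)\<^sup>2)"
        unfolding OUQ by (rule int_gauss_bounded[where B=4]) (use b2 in auto)
      show "(OU t f x - f x)\<^sup>2 \<le> 4" for x unfolding OUQ by (rule b2)
    qed simp
    also have "\<dots> = 4" by simp
    also have "4 \<le> \<epsilon>\<^sup>2 / 5" using True unfolding E_def by simp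
    finally show ?thesis .
  next
    case False
    then have E20: "E < 20" by simp
    obtain g where gm[measurable]: "g \<in> borel_measurable borel" and gv: "\<forall>x. g x \<in> {-1, 1}"
      and fg: "(\<integral>x. \<bar>f x - g x\<bar> \<partial>gauss) \<le> \<eta>" and gs: "surf g \<le> ereal (s * (1 + \<eta>))"
      using assms(6) unfolding smooth_def \<eta>_def by blast
    have gb: "\<bar>g x\<bar> \<le> 1" for x using gv[rule_format, of x] by auto
    define A where "A = {x. g x = 1}"
    have A[measurable]: "A \<in> sets borel"
    proof -
      have "A = {x \<in> space borel. g x = 1}" unfolding A_def by simp
      also have "\<dots> \<in> sets borel" by measurable
      finally show ?thesis .
    qed
    have gA: "g x = 2 * indicator A x - 1" for x using gv unfolding A_def by (auto simp: indicator_def)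
    define \<sigma> where "\<sigma> = sqrt (1 - \<rho>\<^sup>2)"
    define \<phi> where "\<phi> = arccos \<rho>"
    have cph: "cos \<phi> = \<rho>" unfolding \<phi>_def using \<rho> by (intro cos_arccos) auto
    have sph: "sin \<phi> = \<sigma>" unfolding \<phi>_def \<sigma>_def using \<rho> by (intro sin_arccos) auto
    have ph0: "0 < \<phi>"
    proof -
      have "arccos 1 < arccos \<rho>" using \<rho> by (intro arccos_less_arccos) auto
      then show ?thesis unfolding \<phi>_def by simp
    qed
    have ph1: "\<phi> \<le> pi / 2"
    proof -
      have "arccos \<rho> \<le> arccos 0" using \<rho> by (intro arccos_le_arccos) auto
      then show ?thesis unfolding \<phi>_def by simp
    qed
    have \<eta>pos: "\<eta> \<ge> 0" unfolding \<eta>_def by simp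
    have Bpos: "s * (1 + \<eta>) > 0" using assms(2) \<eta>pos by simp
    have Dind: "Dcs (cos \<phi>) (sin \<phi>) (indicator A) \<le> \<phi> * (s * (1 + \<eta>))"
      by (rule D_ind_final[OF A ph0 ph1 Bpos]) (use gs in \<open>simp add: surf_def A_def\<close>)
    have Dg: "Dcs \<rho> \<sigma> g = 2 * Dcs \<rho> \<sigma> (indicator A)"
    proof -
      have "Dcs \<rho> \<sigma> g = (\<integral>p. 2 * \<bar>indicator A (\<rho> *\<^sub>R fst p + \<sigma> *\<^sub>R snd p) - indicator A (fst p)\<bar> \<partial>(M2::('a\<times>'a) measure))"
        unfolding Dcs_def gA abs2 ..
      also have "\<dots> = 2 * Dcs \<rho> \<sigma> (indicator A)" unfolding Dcs_def by (rule integral_mult_right_zero)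
      finally show ?thesis .
    qed
    have "(\<integral>x. \<bar>Q \<rho> f x - f x\<bar> \<partial>gauss) \<le> (\<integral>x. \<bar>Q \<rho> f x - Q \<rho> g x\<bar> \<partial>gauss) + (\<integral>x. \<bar>Q \<rho> g x - g x\<bar> \<partial>gauss) + (\<integral>x. \<bar>g x - f x\<bar> \<partial>gauss)"
      by (rule triangle_int[OF Qm _ gm fm Qb _ gb fb]) (auto intro: Q_bound[OF gm gb])
    also have "(\<integral>x. \<bar>Q \<rho> f x - Q \<rho> g x\<bar> \<partial>gauss) \<le> (\<integral>x. \<bar>f x - g x\<bar> \<partial>gauss)"
      by (rule Q_contract[OF fm gm fb gb]) (use \<rho> in auto)
    also have "(\<integral>x. \<bar>Q \<rho> g x - g x\<bar> \<partial>gauss) \<le> Dcs \<rho> \<sigma> g"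
      unfolding \<sigma>_def by (rule Q_diff_le_D[OF gm gb])
    also have "(\<integral>x. \<bar>g x - f x\<bar> \<partial>gauss) = (\<integral>x. \<bar>f x - g x\<bar> \<partial>gauss)" by (simp add: abs_minus_commute)
    finally have L1: "(\<integral>x. \<bar>Q \<rho> f x - f x\<bar> \<partial>gauss) \<le> 2 * \<eta> + 2 * (\<phi> * (s * (1 + \<eta>)))"
      using fg Dind Dg cph sph by simp
    have phb: "\<phi> \<le> sqrt 2 * E / (30 * s)"
    proof -
      have "\<phi> \<le> sqrt (2 * t)" unfolding \<phi>_def \<rho>_def by (rule arccos_exp_le) (use tpos in simp)
      also have "2 * t = (sqrt 2 * E / (30 * s))\<^sup>2"
        unfolding assms(3) E_def using assms(2) by (simp add: power_divide power_mult_distrib field_simps)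
      also have "sqrt \<dots> = sqrt 2 * E / (30 * s)" using Epos assms(2) by simp
      finally show ?thesis .
    qed
    have ps: "\<phi> * s \<le> sqrt 2 * E / 30"
    proof -
      have "\<phi> * s \<le> (sqrt 2 * E / (30 * s)) * s" using phb assms(2) by (intro mult_right_mono) auto
      also have "\<dots> = sqrt 2 * E / 30" using assms(2) by simp
      finally show ?thesis .
    qed
    have eta: "\<eta> = E / 900" unfolding \<eta>_def E_def by (simp add: power_divide)
    have e1: "1 + \<eta> \<le> 46 / 45" using E20 eta by simp
    have "2 * (2 * \<eta> + 2 * (\<phi> * (s * (1 + \<eta>)))) = 4 * \<eta> + 4 * ((\<phi> * s) * (1 + \<eta>))" by (simp add: algebra_simps)
    also have "(\<phi> * s) * (1 + \<eta>) \<le> (sqrt 2 * E / 30) * (1 + \<eta>)" using ps \<eta>pos by (intro mult_right_mono) auto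
    also have "(sqrt 2 * E / 30) * (1 + \<eta>) = (E / 30) * (sqrt 2 * (1 + \<eta>))" by simp
    also have "sqrt 2 * (1 + \<eta>) \<le> (1415 / 1000) * (46 / 45)"
      using sqrt2_bound e1 \<eta>pos by (intro mult_mono) auto
    finally have "2 * (2 * \<eta> + 2 * (\<phi> * (s * (1 + \<eta>)))) \<le> 4 * \<eta> + 4 * ((E / 30) * ((1415 / 1000) * (46 / 45)))"
      using Epos by (simp add: mult_left_mono)
    also have "\<dots> \<le> E / 5" using Epos unfolding eta by simp
    finally have fin: "2 * (2 * \<eta> + 2 * (\<phi> * (s * (1 + \<eta>)))) \<le> E / 5" .
    have "(\<integral>x. (OU t f x - f x)\<^sup>2 \<partial>gauss) \<le> 2 * (2 * \<eta> + 2 * (\<phi> * (s * (1 + \<eta>))))"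
      using sq L1 by simp
    also note fin
    finally show ?thesis unfolding E_def .
  qed
qed


end
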